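(* Let $k$ be a field with a non-archimedean absolute value $v:k\to\mathbb T$. Let $A_0$ be the monoid (with an adjoined zero) of an affine toric $k$-variety $\operatorname{Spec}k[A_0]^+$, let $R$ be a $k$-algebra and $\pi:k[A_0]^+\to R$ a surjective $k$-algebra homomorphism (a closed embedding $\iota:Y=\operatorname{Spec}R\to\operatorname{Spec}k[A_0]^+$). Let $B$ be the blueprint with $B^+=R$ (trivially ordered) and $B^\bullet=\{\pi(c\,a): c\in k,\ a\in A_0\}$, and let $\beta:B\to R$ be the inclusion (with $R$ viewed as the trivially ordered blueprint with $R^\bullet=R^+=R$). Then: (1) the Berkovich space $Y^{\mathrm{an}}$ is naturally homeomorphic to $\mathrm{Hom}_{\mathbb T}(\mathrm{Bend}_v(R),\mathbb T)$, via $w\mapsto (r\otimes t\mapsto w(r)t)$; (2) the Kajiwara–Payne tropicalization $\mathrm{Trop}^{KP}_{v,\iota}(Y)$ is naturally homeomorphic to $\mathrm{Hom}_{\mathbb T}(\mathrm{Bend}_v(B),\mathbb T)$, via the map sending $f:\mathrm{Bend}_v(B)\to\mathbb T$ to the monoid morphism $a\mapsto f(\pi(a)\otimes1)$; (3) the square whose top arrow is $\mathrm{trop}^{KP}_{v,\iota}:Y^{\mathrm{an}}\to\mathrm{Trop}^{KP}_{v,\iota}(Y)$, whose vertical arrows are these homeomorphisms and whose bottom arrow is precomposition with $\mathrm{Bend}_v(\beta):\mathrm{Bend}_v(B)\to\mathrm{Bend}_v(R)$, is a commutative diagram of continuous maps.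
   Context: $\mathbb T$ (tropical numbers) is the semiring $\mathbb R_{\ge0}$ with usual multiplication and addition $a+b=\max\{a,b\}$, with the real topology. A non-archimedean absolute value $v:k\to\mathbb T$ is a multiplicative map with $v(0)=0$, $v(1)=1$, $v(a+b)\le\max\{v(a),v(b)\}$. $k[A_0]^+$ denotes the monoid algebra of $A_0$ over $k$ with the zero of $A_0$ identified with $0$. Berkovich space: $Y^{\mathrm{an}}$ is the set of multiplicative maps $w:R\to\mathbb R_{\ge0}$ with $w(0)=0$, $w(1)=1$, $w(a+b)\le\max\{w(a),w(b)\}$ and $w|_k=v$, with the coarsest topology making all $w\mapsto w(r)$ ($r\in R$) continuous. $\mathrm{Hom}(A_0,\mathbb T)$ is the set of monoid morphisms preserving $0$ and $1$, with the topology of pointwise convergence; $\mathrm{trop}^{KP}_{v,\iota}(w)=(a\mapsto w(\pi(a)))$ and $\mathrm{Trop}^{KP}_{v,\iota}(Y)$ is its image with the subspace topology. Ordered blueprints: pairs of an ordered semiring $B^+$ (commutative, partial order compatible with $+$ and $\cdot$) and a multiplicatively closed generating subset $B^\bullet\ni0,1$; morphisms are order-preserving semiring homomorphisms preserving $\bullet$. Rings/semirings are viewed as trivially ordered with $R^\bullet=R$; $k$ is a $k$-algebra, $\mathbb T$ an ordered blue $\mathbb T$-algebra. The valuation $v$ is a valuation in the sense: multiplicative map on underlying monoids with $a\le \sum b_j$ implying $v(a)\le\sum v(b_j)$ in the natural order of $\mathbb T$. For an ordered blue $k$-algebra $C$, $\mathrm{Bend}_v(C)$ is the ordered blue $\mathbb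 T$-algebra with underlying monoid $C^\bullet\otimes_{k^\bullet}\mathbb T$ (elements $c\otimes t$, $(\lambda c)\otimes t=c\otimes v(\lambda)t$ for $\lambda\in k$) and semiring the quotient of $\mathbb T[C^\bullet]^+$ by the congruence generated by $(v(\lambda)t)\cdot c=t\cdot(\lambda c)$ and $t a+\sum_j t b_j=\sum_j t b_j$ whenever $a\le\sum b_j$ in $C^+$. $\mathrm{Hom}_{\mathbb T}(\mathrm{Bend}_v(C),\mathbb T)$ (the $\mathbb T$-rational points of $\operatorname{Spec}\mathrm{Bend}_v(C)$) carries the coarsest topology making all evaluation maps $f\mapsto f(x)$ continuous. *)

theory Defs
  imports "HOL-Analysis.Analysis"
begin

text \<open>Elements of T are nonnegative reals; tropical addition is max.\<close>

definition nonarch_abs :: "('k::field \<Rightarrow> real) \<Rightarrow> bool" where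
  "nonarch_abs v \<longleftrightarrow> (\<forall>a. v a \<ge> 0) \<and> v 0 = 0 \<and> v 1 = 1 \<and>
     (\<forall>a b. v (a * b) = v a * v b) \<and> (\<forall>a b. v (a + b) \<le> max (v a) (v b))"

definition k_algebra_map :: "('k::field \<Rightarrow> 'r::comm_ring_1) \<Rightarrow> bool" where
  "k_algebra_map emb \<longleftrightarrow> emb 0 = 0 \<and> emb 1 = 1 \<and>
     (\<forall>a b. emb (a + b) = emb a + emb b) \<and> (\<forall>a b. emb (a * b) = emb a * emb b)"

text \<open>A0 = A with an adjoined zero, where A is a finitely generated, cancellative,
  torsion-free commutative monoid (the monoid of an affine toric variety).\<close>

definition toric_monoid0 :: "'a::{comm_monoid_mult,mult_zero,zero_neq_one} itself \<Rightarrow> bool" where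
  "toric_monoid0 _ \<longleftrightarrow>
     (\<forall>a b::'a. a * b = 0 \<longrightarrow> a = 0 \<or> b = 0) \<and>
     (\<forall>a b c::'a. c \<noteq> 0 \<longrightarrow> a * c = b * c \<longrightarrow> a = b) \<and>
     (\<forall>a b::'a. \<forall>n::nat. n > 0 \<longrightarrow> a ^ n = b ^ n \<longrightarrow> a = b) \<and>
     (\<exists>G::'a set. finite G \<and> 0 \<notin> G \<and>
        (\<forall>a::'a. a \<noteq> 0 \<longrightarrow> (\<exists>xs. set xs \<subseteq> G \<and> a = prod_list xs)))"

text \<open>A surjective k-algebra homomorphism k[A0]^+ \<rightarrow> R is, by the universal property
  of the monoid algebra, the same as a morphism of monoids with zero phi : A0 \<rightarrow> R
  (the restriction of pi to A0) whose image spans R over k.\<close>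

definition monoid0_hom :: "('a::{monoid_mult,zero} \<Rightarrow> 'b::{monoid_mult,zero}) \<Rightarrow> bool" where
  "monoid0_hom h \<longleftrightarrow> h 0 = 0 \<and> h 1 = 1 \<and> (\<forall>a b. h (a * b) = h a * h b)"

definition pi_surjective :: "('k::field \<Rightarrow> 'r::comm_ring_1) \<Rightarrow> ('a \<Rightarrow> 'r) \<Rightarrow> bool" where
  "pi_surjective emb phi \<longleftrightarrow>
     (\<forall>r::'r. \<exists>S c. finite S \<and> r = (\<Sum>a\<in>S. emb (c a) * phi a))"

definition Bbullet :: "('k::field \<Rightarrow> 'r::comm_ring_1) \<Rightarrow> ('a \<Rightarrow> 'r) \<Rightarrow> 'r set" where
  "Bbullet emb phi = {emb c * phi a | c a. True}"

definition berk :: "('k::field \<Rightarrow> real) \<Rightarrow> ('k \<Rightarrow> 'r::comm_ring_1) \<Rightarrow> ('r \<Rightarrow> real) set" where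
  "berk v emb = {w. (\<forall>r. w r \<ge> 0) \<and> w 0 = 0 \<and> w 1 = 1 \<and>
      (\<forall>a b. w (a * b) = w a * w b) \<and> (\<forall>a b. w (a + b) \<le> max (w a) (w b)) \<and>
      (\<forall>l. w (emb l) = v l)}"

definition berk_top :: "('k::field \<Rightarrow> real) \<Rightarrow> ('k \<Rightarrow> 'r::comm_ring_1) \<Rightarrow> ('r \<Rightarrow> real) topology" where
  "berk_top v emb = subtopology (product_topology (\<lambda>_. euclideanreal) UNIV) (berk v emb)"

definition monhom_T :: "('a::{monoid_mult,zero} \<Rightarrow> real) set" where
  "monhom_T = {h. (\<forall>a. h a \<ge> 0) \<and> h 0 = 0 \<and> h 1 = 1 \<and> (\<forall>a b. h (a * b) = h a * h b)}"

definition monhom_top :: "('a::{monoid_mult,zero} \<Rightarrow> real) topology" where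
  "monhom_top = subtopology (product_topology (\<lambda>_. euclideanreal) UNIV) monhom_T"

definition tropKP :: "('a \<Rightarrow> 'r) \<Rightarrow> ('r \<Rightarrow> real) \<Rightarrow> ('a \<Rightarrow> real)" where
  "tropKP phi w = (\<lambda>a. w (phi a))"

definition TropKP_top :: "('k::field \<Rightarrow> real) \<Rightarrow> ('k \<Rightarrow> 'r::comm_ring_1) \<Rightarrow> ('a::{monoid_mult,zero} \<Rightarrow> 'r)
     \<Rightarrow> ('a \<Rightarrow> real) topology" where
  "TropKP_top v emb phi = subtopology monhom_top (tropKP phi ` berk v emb)"

text \<open>Elements of T[M]^+ for M = C^bullet a subset of 'r: finitely supported
  T-valued coefficient functions with support in M (formal sums).\<close>

definition fsum :: "'c set \<Rightarrow> ('c \<Rightarrow> real) set" where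
  "fsum M = {x. (\<forall>m. x m \<ge> 0) \<and> finite {m. x m \<noteq> 0} \<and> {m. x m \<noteq> 0} \<subseteq> M}"

definition tzero :: "'c \<Rightarrow> real" where "tzero = (\<lambda>_. 0)"

definition tmono :: "real \<Rightarrow> 'c \<Rightarrow> ('c \<Rightarrow> real)" where
  "tmono t c = (\<lambda>m. if m = c then t else 0)"

definition tadd :: "('c \<Rightarrow> real) \<Rightarrow> ('c \<Rightarrow> real) \<Rightarrow> ('c \<Rightarrow> real)" where
  "tadd x y = (\<lambda>m. max (x m) (y m))"

definition tmul :: "('c::times \<Rightarrow> real) \<Rightarrow> ('c \<Rightarrow> real) \<Rightarrow> ('c \<Rightarrow> real)" where
  "tmul x y = (\<lambda>p. Max (insert 0 {x m * y n | m n. m * n = p \<and> x m \<noteq> 0 \<and> y n \<noteq> 0}))"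

definition tsum_list :: "('c \<Rightarrow> real) list \<Rightarrow> ('c \<Rightarrow> real)" where
  "tsum_list xs = foldr tadd xs tzero"

text \<open>The congruence on T[C^bullet]^+ defining Bend_v(C), for C a blueprint whose
  ambient semiring is the trivially ordered ring 'r and whose monoid is Cb \<subseteq> 'r
  (so a \<le> sum b_j in C^+ means a = sum b_j in 'r).\<close>

inductive_set bend_cong ::
  "('k::field \<Rightarrow> real) \<Rightarrow> ('k \<Rightarrow> 'r::comm_ring_1) \<Rightarrow> 'r set \<Rightarrow> (('r \<Rightarrow> real) \<times> ('r \<Rightarrow> real)) set"
  for v emb Cb where
  gen_scalar: "\<lbrakk>c \<in> Cb; t \<ge> 0\<rbrakk> \<Longrightarrow> (tmono (v l * t) c, tmono t (emb l * c)) \<in> bend_cong v emb Cb"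
| gen_order: "\<lbrakk>a \<in> Cb; set bs \<subseteq> Cb; a = sum_list bs; t \<ge> 0\<rbrakk> \<Longrightarrow>
     (tadd (tmono t a) (tsum_list (map (tmono t) bs)), tsum_list (map (tmono t) bs)) \<in> bend_cong v emb Cb"
| refl: "x \<in> fsum Cb \<Longrightarrow> (x, x) \<in> bend_cong v emb Cb"
| sym: "(x, y) \<in> bend_cong v emb Cb \<Longrightarrow> (y, x) \<in> bend_cong v emb Cb"
| trans: "\<lbrakk>(x, y) \<in> bend_cong v emb Cb; (y, z) \<in> bend_cong v emb Cb\<rbrakk> \<Longrightarrow> (x, z) \<in> bend_cong v emb Cb"
| add: "\<lbrakk>(x, y) \<in> bend_cong v emb Cb; (x', y') \<in> bend_cong v emb Cb\<rbrakk> \<Longrightarrow>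
     (tadd x x', tadd y y') \<in> bend_cong v emb Cb"
| mul: "\<lbrakk>(x, y) \<in> bend_cong v emb Cb; (x', y') \<in> bend_cong v emb Cb\<rbrakk> \<Longrightarrow>
     (tmul x x', tmul y y') \<in> bend_cong v emb Cb"

text \<open>Hom_T(Bend_v(C), T): T-algebra morphisms out of the quotient, represented by
  semiring morphisms T[C^bullet]^+ \<rightarrow> T (extensional on T[C^bullet]^+) that are
  constant on congruence classes and restrict to the identity on T.\<close>

definition bend_hom :: "('k::field \<Rightarrow> real) \<Rightarrow> ('k \<Rightarrow> 'r::comm_ring_1) \<Rightarrow> 'r set
     \<Rightarrow> (('r \<Rightarrow> real) \<Rightarrow> real) set" where
  "bend_hom v emb Cb = {f. f \<in> extensional (fsum Cb) \<and>
      (\<forall>x\<in>fsum Cb. f x \<ge> 0) \<and> f tzero = 0 \<and> f (tmono 1 1) = 1 \<and>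
      (\<forall>x\<in>fsum Cb. \<forall>y\<in>fsum Cb. f (tadd x y) = max (f x) (f y)) \<and>
      (\<forall>x\<in>fsum Cb. \<forall>y\<in>fsum Cb. f (tmul x y) = f x * f y) \<and>
      (\<forall>t\<ge>0. f (tmono t 1) = t) \<and>
      (\<forall>(x, y)\<in>bend_cong v emb Cb. f x = f y)}"

definition bend_top :: "('k::field \<Rightarrow> real) \<Rightarrow> ('k \<Rightarrow> 'r::comm_ring_1) \<Rightarrow> 'r set
     \<Rightarrow> (('r \<Rightarrow> real) \<Rightarrow> real) topology" where
  "bend_top v emb Cb = subtopology (product_topology (\<lambda>_. euclideanreal) (fsum Cb)) (bend_hom v emb Cb)"

text \<open>w \<mapsto> (r \<otimes> t \<mapsto> w(r) t), extended additively to formal sums.\<close>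

definition berk_to_bend :: "('r \<Rightarrow> real) \<Rightarrow> (('r \<Rightarrow> real) \<Rightarrow> real)" where
  "berk_to_bend w = restrict (\<lambda>x. Max (insert 0 {x m * w m | m. x m \<noteq> 0})) (fsum UNIV)"

text \<open>f \<mapsto> (a \<mapsto> f(pi(a) \<otimes> 1)).\<close>

definition bend_to_trop :: "('a \<Rightarrow> 'r) \<Rightarrow> (('r \<Rightarrow> real) \<Rightarrow> real) \<Rightarrow> ('a \<Rightarrow> real)" where
  "bend_to_trop phi f = (\<lambda>a. f (tmono 1 (phi a)))"

text \<open>Precomposition with Bend_v(beta), beta : B \<rightarrow> R the inclusion; on formal sums
  Bend_v(beta) is the inclusion T[B^bullet]^+ \<subseteq> T[R]^+.\<close>

definition bend_beta_pullback :: "'r set \<Rightarrow> (('r \<Rightarrow> real) \<Rightarrow> real) \<Rightarrow> (('r \<Rightarrow> real) \<Rightarrow> real)" where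
  "bend_beta_pullback Bb g = restrict g (fsum Bb)"

end

theory Submission
  imports Defs
begin


lemma mx_ge: "finite S \<Longrightarrow> s \<in> S \<Longrightarrow> s \<le> Max (insert (0::real) S)"
  by simp
lemma mx_nonneg: "finite S \<Longrightarrow> 0 \<le> Max (insert (0::real) S)"
  by simp
lemma mx_le: "finite S \<Longrightarrow> (\<And>s. s \<in> S \<Longrightarrow> s \<le> B) \<Longrightarrow> 0 \<le> B \<Longrightarrow> Max (insert (0::real) S) \<le> B"
  by simp
lemma mx_cases: "finite S \<Longrightarrow> Max (insert (0::real) S) = 0 \<or> Max (insert (0::real) S) \<in> S"
  using Max_in[of "insert 0 S"] by auto

definition ev :: "('c \<Rightarrow> real) \<Rightarrow> ('c \<Rightarrow> real) \<Rightarrow> real" where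
  "ev w x = Max (insert 0 {x m * w m | m. x m \<noteq> 0})"

lemma fsumD: assumes "x \<in> fsum M" shows "\<And>m. x m \<ge> 0" "finite {m. x m \<noteq> 0}" "\<And>m. x m \<noteq> 0 \<Longrightarrow> m \<in> M"
  using assms by (auto simp: fsum_def)

lemma ev_set: "{x m * w m | m. x m \<noteq> 0} = (\<lambda>m. x m * w m) ` {m. x m \<noteq> 0}"
  by auto

lemma ev_fin: "x \<in> fsum M \<Longrightarrow> finite {x m * w m | m. x m \<noteq> 0}"
  unfolding ev_set using fsumD(2) by blast

lemma ev_nonneg: "x \<in> fsum M \<Longrightarrow> 0 \<le> ev w x"
  unfolding ev_def using ev_fin mx_nonneg by blast

lemma ev_ge: assumes "x \<in> fsum M" shows "x m * w m \<le> ev w x"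
proof (cases "x m = 0")
  case True then show ?thesis using ev_nonneg[OF assms, of w] by auto
next
  case False
  show ?thesis unfolding ev_def using False by (intro mx_ge[OF ev_fin[OF assms]]) auto
qed

lemma ev_le: "x \<in> fsum M \<Longrightarrow> 0 \<le> B \<Longrightarrow> (\<And>m. x m \<noteq> 0 \<Longrightarrow> x m * w m \<le> B) \<Longrightarrow> ev w x \<le> B"
  unfolding ev_def by (rule mx_le[OF ev_fin]) auto

lemma ev_cases: "x \<in> fsum M \<Longrightarrow> ev w x = 0 \<or> (\<exists>m. x m \<noteq> 0 \<and> ev w x = x m * w m)"
  unfolding ev_def using mx_cases[OF ev_fin] by blast

lemma tmono_fsum: "t \<ge> 0 \<Longrightarrow> c \<in> M \<Longrightarrow> tmono t c \<in> fsum M"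
  unfolding fsum_def tmono_def by auto

lemma tmono_zero: "tmono 0 c = tzero"
  unfolding tmono_def tzero_def by auto

lemma tzero_fsum: "tzero \<in> fsum M"
  unfolding fsum_def tzero_def by auto

lemma tadd_fsum: "x \<in> fsum M \<Longrightarrow> y \<in> fsum M \<Longrightarrow> tadd x y \<in> fsum M"
proof -
  assume x: "x \<in> fsum M" and y: "y \<in> fsum M"
  have "{m. tadd x y m \<noteq> 0} \<subseteq> {m. x m \<noteq> 0} \<union> {m. y m \<noteq> 0}"
    unfolding tadd_def by auto
  then show ?thesis using x y unfolding fsum_def tadd_def
    by (auto intro: finite_subset simp: le_max_iff_disj) 
qed

lemma tsum_list_Nil: "tsum_list [] = tzero" by (simp add: tsum_list_def)
lemma tsum_list_Cons: "tsum_list (x # xs) = tadd x (tsum_list xs)" by (simp add: tsum_list_def)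

lemma tsum_list_fsum: "set xs \<subseteq> fsum M \<Longrightarrow> tsum_list xs \<in> fsum M"
  by (induction xs) (auto simp: tsum_list_Nil tsum_list_Cons tzero_fsum tadd_fsum)

lemma tmul_set_fin:
  assumes "x \<in> fsum M" "y \<in> fsum M"
  shows "finite {x m * y n | m n. m * n = p \<and> x m \<noteq> 0 \<and> y n \<noteq> 0}"
proof -
  have "{x m * y n | m n. m * n = p \<and> x m \<noteq> 0 \<and> y n \<noteq> 0} \<subseteq> (\<lambda>(m,n). x m * y n) ` ({m. x m \<noteq> 0} \<times> {n. y n \<noteq> 0})"
    by auto
  then show ?thesis using fsumD(2)[OF assms(1)] fsumD(2)[OF assms(2)]
    by (meson finite_SigmaI finite_imageI finite_subset)
qed

lemma tmul_supp:
  assumes "x \<in> fsum M" "y \<in> fsum M"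
  shows "{p. tmul x y p \<noteq> 0} \<subseteq> (\<lambda>(m,n). m * n) ` ({m. x m \<noteq> 0} \<times> {n. y n \<noteq> 0})"
proof
  fix p assume "p \<in> {p. tmul x y p \<noteq> 0}"
  then have "Max (insert 0 {x m * y n | m n. m * n = p \<and> x m \<noteq> 0 \<and> y n \<noteq> 0}) \<noteq> 0" by (simp add: tmul_def)
  then have "Max (insert 0 {x m * y n | m n. m * n = p \<and> x m \<noteq> 0 \<and> y n \<noteq> 0}) \<in> {x m * y n | m n. m * n = p \<and> x m \<noteq> 0 \<and> y n \<noteq> 0}"
    using mx_cases[OF tmul_set_fin[OF assms]] by blast
  then show "p \<in> (\<lambda>(m,n). m * n) ` ({m. x m \<noteq> 0} \<times> {n. y n \<noteq> 0})" by auto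
qed

lemma tmul_ge: "x \<in> fsum M \<Longrightarrow> y \<in> fsum M \<Longrightarrow> x m * y n \<le> tmul x y (m * n)"
proof -
  assume a: "x \<in> fsum M" "y \<in> fsum M"
  show ?thesis
  proof (cases "x m = 0 \<or> y n = 0")
    case True then show ?thesis unfolding tmul_def using mx_nonneg[OF tmul_set_fin[OF a]] by auto
  next
    case False then show ?thesis unfolding tmul_def by (intro mx_ge[OF tmul_set_fin[OF a]]) auto
  qed
qed

lemma tmul_nonneg: "x \<in> fsum M \<Longrightarrow> y \<in> fsum M \<Longrightarrow> 0 \<le> tmul x y p"
  unfolding tmul_def using mx_nonneg tmul_set_fin by blast

lemma tmul_cases: "x \<in> fsum M \<Longrightarrow> y \<in> fsum M \<Longrightarrow> tmul x y p = 0 \<or> (\<exists>m n. m * n = p \<and> x m \<noteq> 0 \<and> y n \<noteq> 0 \<and> tmul x y p = x m * y n)"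
  unfolding tmul_def using mx_cases[OF tmul_set_fin] by blast

definition mulclosed :: "'c::times set \<Rightarrow> bool" where
  "mulclosed M \<longleftrightarrow> (\<forall>a\<in>M. \<forall>b\<in>M. a * b \<in> M)"

lemma tmul_fsum: "mulclosed M \<Longrightarrow> x \<in> fsum M \<Longrightarrow> y \<in> fsum M \<Longrightarrow> tmul x y \<in> fsum M"
proof -
  assume mc: "mulclosed M" and a: "x \<in> fsum M" "y \<in> fsum M"
  have fin: "finite {p. tmul x y p \<noteq> 0}"
    using tmul_supp[OF a] fsumD(2)[OF a(1)] fsumD(2)[OF a(2)] by (auto intro: finite_subset)
  have "{p. tmul x y p \<noteq> 0} \<subseteq> M"
  proof
    fix p assume "p \<in> {p. tmul x y p \<noteq> 0}"
    then obtain m n where "p = m * n" "x m \<noteq> 0" "y n \<noteq> 0" using tmul_supp[OF a] by fast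
    then show "p \<in> M" using fsumD(3)[OF a(1)] fsumD(3)[OF a(2)] mc unfolding mulclosed_def by blast
  qed
  then show ?thesis using fin tmul_nonneg[OF a] unfolding fsum_def by auto
qed

lemma tmul_tmono: assumes "s \<ge> 0" "t \<ge> 0" shows "tmul (tmono s a) (tmono t b) = tmono (s * t) (a * b)"
proof
  fix p
  have "{tmono s a m * tmono t b n | m n. m * n = p \<and> tmono s a m \<noteq> 0 \<and> tmono t b n \<noteq> 0}
      = (if p = a * b \<and> s \<noteq> 0 \<and> t \<noteq> 0 then {s * t} else {})"
    unfolding tmono_def by auto
  then show "tmul (tmono s a) (tmono t b) p = tmono (s * t) (a * b) p"
    unfolding tmul_def using assms by (auto simp: tmono_def)
qed

lemma ev_tmono: "t \<ge> 0 \<Longrightarrow> w c \<ge> 0 \<Longrightarrow> ev w (tmono t c) = t * w c"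
proof -
  assume a: "t \<ge> 0" "w c \<ge> 0"
  have "{tmono t c m * w m | m. tmono t c m \<noteq> 0} = (if t = 0 then {} else {t * w c})"
    unfolding tmono_def by auto
  then show ?thesis unfolding ev_def using a by auto
qed

lemma ev_tzero: "ev w tzero = 0"
  unfolding ev_def tzero_def by auto

lemma ev_tadd:
  assumes x: "x \<in> fsum M" and y: "y \<in> fsum M" and w: "\<And>m. m \<in> M \<Longrightarrow> w m \<ge> 0"
  shows "ev w (tadd x y) = max (ev w x) (ev w y)"
proof (rule antisym)
  have xy: "tadd x y \<in> fsum M" using tadd_fsum[OF x y] .
  show "ev w (tadd x y) \<le> max (ev w x) (ev w y)"
  proof (rule ev_le[OF xy])
    show "0 \<le> max (ev w x) (ev w y)" using ev_nonneg[OF x, of w] by auto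
    fix m assume "tadd x y m \<noteq> 0"
    then have "m \<in> M" using fsumD(3)[OF xy] by blast
    then have "w m \<ge> 0" using w by blast
    then have "tadd x y m * w m = max (x m * w m) (y m * w m)"
      unfolding tadd_def by (simp add: max_mult_distrib_right)
    also have "\<dots> \<le> max (ev w x) (ev w y)" using ev_ge[OF x, of m w] ev_ge[OF y, of m w] by auto
    finally show "tadd x y m * w m \<le> max (ev w x) (ev w y)" .
  qed
  have "ev w x \<le> ev w (tadd x y)"
  proof (cases "ev w x = 0")
    case True then show ?thesis using ev_nonneg[OF xy] by simp
  next
    case False
    then obtain m where m: "x m \<noteq> 0" "ev w x = x m * w m" using ev_cases[OF x] by blast
    have "w m \<ge> 0" using w fsumD(3)[OF x m(1)] by blast
    then have "x m * w m \<le> tadd x y m * w m" unfolding tadd_def by (intro mult_right_mono) auto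
    then show ?thesis using m ev_ge[OF xy, of m w] by linarith
  qed
  moreover have "ev w y \<le> ev w (tadd x y)"
  proof (cases "ev w y = 0")
    case True then show ?thesis using ev_nonneg[OF xy] by simp
  next
    case False
    then obtain m where m: "y m \<noteq> 0" "ev w y = y m * w m" using ev_cases[OF y] by blast
    have "w m \<ge> 0" using w fsumD(3)[OF y m(1)] by blast
    then have "y m * w m \<le> tadd x y m * w m" unfolding tadd_def by (intro mult_right_mono) auto
    then show ?thesis using m ev_ge[OF xy, of m w] by linarith
  qed
  ultimately show "max (ev w x) (ev w y) \<le> ev w (tadd x y)" by simp
qed

lemma ev_tmul:
  assumes mc: "mulclosed M" and x: "x \<in> fsum M" and y: "y \<in> fsum M"
    and w: "\<And>m. m \<in> M \<Longrightarrow> w m \<ge> 0" and wm: "\<And>m n. m \<in> M \<Longrightarrow> n \<in> M \<Longrightarrow> w (m * n) = w m * w n"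
  shows "ev w (tmul x y) = ev w x * ev w y"
proof (rule antisym)
  have xy: "tmul x y \<in> fsum M" using tmul_fsum[OF mc x y] .
  show "ev w (tmul x y) \<le> ev w x * ev w y"
  proof (rule ev_le[OF xy])
    show "0 \<le> ev w x * ev w y" using ev_nonneg[OF x, of w] ev_nonneg[OF y, of w] by auto
    fix p assume p: "tmul x y p \<noteq> 0"
    then obtain m n where mn: "m * n = p" "x m \<noteq> 0" "y n \<noteq> 0" "tmul x y p = x m * y n"
      using tmul_cases[OF x y, of p] by blast
    have M: "m \<in> M" "n \<in> M" using fsumD(3)[OF x mn(2)] fsumD(3)[OF y mn(3)] by auto
    have "tmul x y p * w p = (x m * w m) * (y n * w n)" using mn wm[OF M] by (simp add: algebra_simps)
    also have "\<dots> \<le> ev w x * ev w y"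
      using ev_ge[OF x, of m w] ev_ge[OF y, of n w] fsumD(1)[OF x, of m] fsumD(1)[OF y, of n] w[OF M(1)] w[OF M(2)] ev_nonneg[OF x, of w]
      by (intro mult_mono) auto
    finally show "tmul x y p * w p \<le> ev w x * ev w y" .
  qed
  show "ev w x * ev w y \<le> ev w (tmul x y)"
  proof (cases "ev w x = 0 \<or> ev w y = 0")
    case True then show ?thesis using ev_nonneg[OF xy] by auto
  next
    case False
    then obtain m n where m: "x m \<noteq> 0" "ev w x = x m * w m" and n: "y n \<noteq> 0" "ev w y = y n * w n"
      using ev_cases[OF x] ev_cases[OF y] by metis
    have M: "m \<in> M" "n \<in> M" using fsumD(3)[OF x m(1)] fsumD(3)[OF y n(1)] by auto
    have "ev w x * ev w y = (x m * y n) * w (m * n)" using m n wm[OF M] by (simp add: algebra_simps)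
    also have "\<dots> \<le> tmul x y (m * n) * w (m * n)"
      using tmul_ge[OF x y] w[OF M(1)] w[OF M(2)] wm[OF M] by (intro mult_right_mono) auto
    also have "\<dots> \<le> ev w (tmul x y)" by (rule ev_ge[OF xy])
    finally show ?thesis .
  qed
qed



definition good :: "('k::field \<Rightarrow> 'r::comm_ring_1) \<Rightarrow> 'r set \<Rightarrow> bool" where
  "good emb Cb \<longleftrightarrow> 1 \<in> Cb \<and> mulclosed Cb \<and> (\<forall>l. \<forall>c\<in>Cb. emb l * c \<in> Cb)"

lemma nonarchD: assumes "nonarch_abs v"
  shows "\<And>a. v a \<ge> 0" "v 0 = 0" "v 1 = 1" "\<And>a b. v (a * b) = v a * v b" "\<And>a b. v (a + b) \<le> max (v a) (v b)"
  using assms unfolding nonarch_abs_def by auto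

lemma kalgD: assumes "k_algebra_map emb"
  shows "emb 0 = 0" "emb 1 = 1" "\<And>a b. emb (a + b) = emb a + emb b" "\<And>a b. emb (a * b) = emb a * emb b"
  using assms unfolding k_algebra_map_def by auto

lemma cong_fsum:
  assumes v: "nonarch_abs v" and g: "good emb Cb" and xy: "(x, y) \<in> bend_cong v emb Cb"
  shows "x \<in> fsum Cb \<and> y \<in> fsum Cb"
  using xy
proof (induction rule: bend_cong.induct)
  case (gen_scalar c t l)
  then show ?case using g nonarchD(1)[OF v, of l] unfolding good_def
    by (auto intro!: tmono_fsum)
next
  case (gen_order a bs t)
  have "set (map (tmono t) bs) \<subseteq> fsum Cb" using gen_order by (auto intro: tmono_fsum)
  then have "tsum_list (map (tmono t) bs) \<in> fsum Cb" by (rule tsum_list_fsum)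
  then show ?case using gen_order by (auto intro: tadd_fsum tmono_fsum)
next
  case (mul x y x' y') then show ?case using g unfolding good_def by (auto intro: tmul_fsum)
qed (auto intro: tadd_fsum)

abbreviation fmax :: "('r \<Rightarrow> real) \<Rightarrow> 'r list \<Rightarrow> real" where
  "fmax w bs \<equiv> foldr (\<lambda>b acc. max (w b) acc) bs 0"

lemma ev_tsum_list:
  assumes "t \<ge> 0" "set bs \<subseteq> M" "\<And>m. m \<in> M \<Longrightarrow> w m \<ge> 0"
  shows "ev w (tsum_list (map (tmono t) bs)) = t * fmax w bs"
  using assms(2)
proof (induction bs)
  case Nil then show ?case by (simp add: tsum_list_Nil ev_tzero)
next
  case (Cons b bs)
  have f1: "tmono t b \<in> fsum M" using Cons assms by (auto intro: tmono_fsum)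
  have f2: "tsum_list (map (tmono t) bs) \<in> fsum M"
    using Cons assms by (auto intro!: tsum_list_fsum tmono_fsum)
  have "ev w (tsum_list (map (tmono t) (b # bs))) = max (ev w (tmono t b)) (ev w (tsum_list (map (tmono t) bs)))"
    by (simp add: tsum_list_Cons ev_tadd[OF f1 f2 assms(3)])
  also have "\<dots> = max (t * w b) (t * fmax w bs)" using Cons assms by (simp add: ev_tmono)
  also have "\<dots> = t * fmax w (b # bs)" using assms(1) by (simp add: max_mult_distrib_left)
  finally show ?case .
qed

lemma ev_hom:
  assumes v: "nonarch_abs v" and g: "good emb Cb"
    and w0: "\<And>c. c \<in> Cb \<Longrightarrow> w c \<ge> 0" and w1: "w 1 = 1"
    and wm: "\<And>m n. m \<in> Cb \<Longrightarrow> n \<in> Cb \<Longrightarrow> w (m * n) = w m * w n"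
    and ws: "\<And>l c. c \<in> Cb \<Longrightarrow> w (emb l * c) = v l * w c"
    and wo: "\<And>a bs. a \<in> Cb \<Longrightarrow> set bs \<subseteq> Cb \<Longrightarrow> a = sum_list bs \<Longrightarrow> w a \<le> fmax w bs"
  shows "restrict (ev w) (fsum Cb) \<in> bend_hom v emb Cb"
proof -
  let ?f = "restrict (ev w) (fsum Cb)"
  have one: "1 \<in> Cb" and mc: "mulclosed Cb" and sc: "\<And>l c. c \<in> Cb \<Longrightarrow> emb l * c \<in> Cb"
    using g unfolding good_def by auto
  have cong: "?f x = ?f y" if "(x, y) \<in> bend_cong v emb Cb" for x y
    using that
  proof (induction rule: bend_cong.induct)
    case (gen_scalar c t l)
    have a: "tmono (v l * t) c \<in> fsum Cb" "tmono t (emb l * c) \<in> fsum Cb"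
      using gen_scalar nonarchD(1)[OF v, of l] sc by (auto intro!: tmono_fsum)
    show ?case using a gen_scalar nonarchD(1)[OF v, of l] w0 sc
      by (simp add: ev_tmono ws)
  next
    case (gen_order a bs t)
    have T: "tsum_list (map (tmono t) bs) \<in> fsum Cb"
      using gen_order by (auto intro!: tsum_list_fsum tmono_fsum)
    have A: "tmono t a \<in> fsum Cb" using gen_order by (auto intro: tmono_fsum)
    have e1: "ev w (tadd (tmono t a) (tsum_list (map (tmono t) bs))) = max (ev w (tmono t a)) (ev w (tsum_list (map (tmono t) bs)))"
      by (rule ev_tadd[OF A T w0])
    have e2: "ev w (tmono t a) = t * w a" by (rule ev_tmono[of t w a, OF gen_order(4) w0[OF gen_order(1)]])
    have e3: "ev w (tsum_list (map (tmono t) bs)) = t * fmax w bs" by (rule ev_tsum_list[OF gen_order(4) gen_order(2) w0])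
    have "ev w (tadd (tmono t a) (tsum_list (map (tmono t) bs))) = max (t * w a) (t * fmax w bs)"
      unfolding e1 e2 e3 ..
    also have "\<dots> = t * fmax w bs" using wo[OF gen_order(1,2,3)] gen_order(4)
      by (simp add: mult_left_mono)
    finally show ?case using A T tadd_fsum[OF A T] e3 by simp
  next
    case (refl x) then show ?case by simp
  next
    case (sym x y) then show ?case by simp
  next
    case (trans x y z) then show ?case by simp
  next
    case (add x y x' y')
    have f: "x \<in> fsum Cb" "y \<in> fsum Cb" "x' \<in> fsum Cb" "y' \<in> fsum Cb"
      using cong_fsum[OF v g add(1)] cong_fsum[OF v g add(2)] by auto
    then show ?case using add by (simp add: tadd_fsum ev_tadd[OF _ _ w0])
  next
    case (mul x y x' y')
    have f: "x \<in> fsum Cb" "y \<in> fsum Cb" "x' \<in> fsum Cb" "y' \<in> fsum Cb"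
      using cong_fsum[OF v g mul(1)] cong_fsum[OF v g mul(2)] by auto
    then show ?case using mul by (simp add: tmul_fsum[OF mc] ev_tmul[OF mc _ _ w0 wm])
  qed
  show ?thesis unfolding bend_hom_def
  proof (intro CollectI conjI ballI allI impI)
    show "?f \<in> extensional (fsum Cb)" by simp
    show "\<And>x. x \<in> fsum Cb \<Longrightarrow> 0 \<le> ?f x" by (simp add: ev_nonneg)
    show "?f tzero = 0" by (simp add: tzero_fsum ev_tzero)
    show "?f (tmono 1 1) = 1" using one w1 by (simp add: tmono_fsum ev_tmono)
    show "?f (tadd x y) = max (?f x) (?f y)" if "x \<in> fsum Cb" "y \<in> fsum Cb" for x y
      using that by (simp add: tadd_fsum ev_tadd[OF _ _ w0])
    show "?f (tmul x y) = ?f x * ?f y" if "x \<in> fsum Cb" "y \<in> fsum Cb" for x y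
      using that by (simp add: tmul_fsum[OF mc] ev_tmul[OF mc _ _ w0 wm])
    show "?f (tmono t 1) = t" if "t \<ge> 0" for t
      using that one w1 by (simp add: tmono_fsum ev_tmono)
    show "case p of (x, y) \<Rightarrow> ?f x = ?f y" if "p \<in> bend_cong v emb Cb" for p
      using that cong by auto
  qed
qed

lemma bend_homD:
  assumes "f \<in> bend_hom v emb Cb"
  shows "f \<in> extensional (fsum Cb)" "\<And>x. x \<in> fsum Cb \<Longrightarrow> f x \<ge> 0" "f tzero = 0" "f (tmono 1 1) = 1"
    "\<And>x y. x \<in> fsum Cb \<Longrightarrow> y \<in> fsum Cb \<Longrightarrow> f (tadd x y) = max (f x) (f y)"
    "\<And>x y. x \<in> fsum Cb \<Longrightarrow> y \<in> fsum Cb \<Longrightarrow> f (tmul x y) = f x * f y"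
    "\<And>t. t \<ge> 0 \<Longrightarrow> f (tmono t 1) = t"
    "\<And>x y. (x, y) \<in> bend_cong v emb Cb \<Longrightarrow> f x = f y"
  using assms unfolding bend_hom_def by auto

context
  fixes v :: "'k::field \<Rightarrow> real" and emb :: "'k \<Rightarrow> 'r::comm_ring_1" and Cb f
  assumes v: "nonarch_abs v" and g: "good emb Cb" and f: "f \<in> bend_hom v emb Cb"
begin

lemma gA: "1 \<in> Cb" "mulclosed Cb" "\<And>l c. c \<in> Cb \<Longrightarrow> emb l * c \<in> Cb"
  using g unfolding good_def by auto

lemma H_tmono: "t \<ge> 0 \<Longrightarrow> c \<in> Cb \<Longrightarrow> f (tmono t c) = t * f (tmono 1 c)"
proof -
  assume t: "t \<ge> 0" and c: "c \<in> Cb"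
  have "f (tmono t c) = f (tmul (tmono t 1) (tmono 1 c))" by (simp add: tmul_tmono t)
  also have "\<dots> = t * f (tmono 1 c)"
    using bend_homD(6)[OF f, of "tmono t 1" "tmono 1 c"] bend_homD(7)[OF f t] t c gA(1)
    by (simp add: tmono_fsum)
  finally show ?thesis .
qed

lemma H_nonneg: "c \<in> Cb \<Longrightarrow> f (tmono 1 c) \<ge> 0"
  by (rule bend_homD(2)[OF f], rule tmono_fsum) simp_all

lemma H_one: "f (tmono 1 1) = 1" using bend_homD(4)[OF f] .

lemma H_mul: "m \<in> Cb \<Longrightarrow> n \<in> Cb \<Longrightarrow> f (tmono 1 (m * n)) = f (tmono 1 m) * f (tmono 1 n)"
  using bend_homD(6)[OF f, of "tmono 1 m" "tmono 1 n"] by (simp add: tmul_tmono tmono_fsum)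

lemma H_scal: "c \<in> Cb \<Longrightarrow> f (tmono 1 (emb l * c)) = v l * f (tmono 1 c)"
proof -
  assume c: "c \<in> Cb"
  have "(tmono (v l * 1) c, tmono 1 (emb l * c)) \<in> bend_cong v emb Cb"
    by (rule bend_cong.gen_scalar[OF c]) simp
  then have "f (tmono (v l) c) = f (tmono 1 (emb l * c))" using bend_homD(8)[OF f] by auto
  then show ?thesis using H_tmono[OF nonarchD(1)[OF v] c] by simp
qed

lemma f_tsum_list:
  assumes "set bs \<subseteq> Cb"
  shows "f (tsum_list (map (tmono 1) bs)) = fmax (\<lambda>b. f (tmono 1 b)) bs"
  using assms
proof (induction bs)
  case Nil then show ?case using bend_homD(3)[OF f] by (simp add: tsum_list_Nil)
next
  case (Cons b bs)
  have f1: "tmono 1 b \<in> fsum Cb" using Cons by (auto intro: tmono_fsum)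
  have f2: "tsum_list (map (tmono 1) bs) \<in> fsum Cb"
    using Cons by (auto intro!: tsum_list_fsum tmono_fsum)
  show ?case using Cons bend_homD(5)[OF f f1 f2] by (simp add: tsum_list_Cons)
qed

lemma H_ord: "a \<in> Cb \<Longrightarrow> set bs \<subseteq> Cb \<Longrightarrow> a = sum_list bs \<Longrightarrow> f (tmono 1 a) \<le> fmax (\<lambda>b. f (tmono 1 b)) bs"
proof -
  assume a: "a \<in> Cb" "set bs \<subseteq> Cb" "a = sum_list bs"
  have "(tadd (tmono 1 a) (tsum_list (map (tmono 1) bs)), tsum_list (map (tmono 1) bs)) \<in> bend_cong v emb Cb"
    by (rule bend_cong.gen_order[OF a]) simp
  then have e: "f (tadd (tmono 1 a) (tsum_list (map (tmono 1) bs))) = f (tsum_list (map (tmono 1) bs))"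
    using bend_homD(8)[OF f] by auto
  have f1: "tmono 1 a \<in> fsum Cb" using a by (auto intro: tmono_fsum)
  have f2: "tsum_list (map (tmono 1) bs) \<in> fsum Cb"
    using a by (auto intro!: tsum_list_fsum tmono_fsum)
  show ?thesis using e bend_homD(5)[OF f f1 f2] f_tsum_list[OF a(2)] by simp
qed

lemma f_rep: "x \<in> fsum Cb \<Longrightarrow> f x = ev (\<lambda>m. f (tmono 1 m)) x"
proof -
  define W where "W = (\<lambda>m. f (tmono 1 m))"
  have w0: "\<And>m. m \<in> Cb \<Longrightarrow> W m \<ge> 0" unfolding W_def by (rule H_nonneg)
  have "\<forall>x\<in>fsum Cb. {m. x m \<noteq> 0} = F \<longrightarrow> f x = ev W x" if "finite F" for F
    using that
  proof (induction F rule: finite_induct)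
    case empty
    show ?case
    proof (intro ballI impI)
      fix x assume "x \<in> fsum Cb" "{m. x m \<noteq> 0} = {}"
      then have "x = tzero" unfolding tzero_def by auto
      then show "f x = ev W x" using bend_homD(3)[OF f] by (simp add: ev_tzero)
    qed
  next
    case (insert c F)
    show ?case
    proof (intro ballI impI)
      fix x assume x: "x \<in> fsum Cb" and s: "{m. x m \<noteq> 0} = insert c F"
      let ?x' = "x(c := 0)"
      have s': "{m. ?x' m \<noteq> 0} = F" using s insert(2) by auto
      have fin': "finite {m. ?x' m \<noteq> 0}" using s' insert(1) by simp
      have x': "?x' \<in> fsum Cb" unfolding fsum_def
      proof (intro CollectI conjI allI)
        show "finite {m. ?x' m \<noteq> 0}" by (rule fin')
        show "0 \<le> ?x' m" for m using fsumD(1)[OF x, of m] by simp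
        show "{m. ?x' m \<noteq> 0} \<subseteq> Cb" using fsumD(3)[OF x] by auto
      qed
      have c: "c \<in> Cb" using x s unfolding fsum_def by auto
      have xc: "x c \<ge> 0" using x unfolding fsum_def by auto
      have t: "tmono (x c) c \<in> fsum Cb" using xc c by (rule tmono_fsum)
      have dec: "tadd (tmono (x c) c) ?x' = x"
      proof
        fix m show "tadd (tmono (x c) c) ?x' m = x m"
          using fsumD(1)[OF x, of m] by (cases "m = c") (auto simp: tadd_def tmono_def)
      qed
      have e1: "f (tadd (tmono (x c) c) ?x') = max (f (tmono (x c) c)) (f ?x')" by (rule bend_homD(5)[OF f t x'])
      have e2: "ev W (tadd (tmono (x c) c) ?x') = max (ev W (tmono (x c) c)) (ev W ?x')" by (rule ev_tadd[OF t x' w0])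
      have e3: "f (tmono (x c) c) = x c * W c" unfolding W_def by (rule H_tmono[OF xc c])
      have e4: "ev W (tmono (x c) c) = x c * W c" by (rule ev_tmono[of "x c" W c, OF xc w0[OF c]])
      have e5: "f ?x' = ev W ?x'" using insert(3) x' s' by blast
      have "f (tadd (tmono (x c) c) ?x') = ev W (tadd (tmono (x c) c) ?x')"
        unfolding e1 e2 e3 e4 e5 ..
      then show "f x = ev W x" unfolding dec .
    qed
  qed
  then show "x \<in> fsum Cb \<Longrightarrow> f x = ev (\<lambda>m. f (tmono 1 m)) x" using fsumD(2) unfolding W_def by blast
qed

lemma f_eq_restrict: "f = restrict (ev (\<lambda>m. f (tmono 1 m))) (fsum Cb)"
proof
  fix x show "f x = restrict (ev (\<lambda>m. f (tmono 1 m))) (fsum Cb) x"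
  proof (cases "x \<in> fsum Cb")
    case True then show ?thesis using f_rep[OF True] by simp
  next
    case False then show ?thesis using bend_homD(1)[OF f] unfolding extensional_def by simp
  qed
qed

end



lemma inf_max:
  fixes X Y :: "real set"
  assumes "X \<noteq> {}" "Y \<noteq> {}" "bdd_below X" "bdd_below Y" "\<And>x y. x \<in> X \<Longrightarrow> y \<in> Y \<Longrightarrow> c \<le> max x y"
  shows "c \<le> max (Inf X) (Inf Y)"
proof (rule ccontr)
  assume "\<not> ?thesis" then have "Inf X < c" "Inf Y < c" by auto
  then obtain x y where "x \<in> X" "x < c" "y \<in> Y" "y < c" using cInf_lessD assms(1,2) by metis
  then show False using assms(5)[of x y] by auto
qed

lemma inf_nonneg:
  fixes X :: "real set"
  assumes "X \<noteq> {}" "\<And>x. x \<in> X \<Longrightarrow> 0 \<le> x" shows "0 \<le> Inf X"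
  using assms by (intro cInf_greatest) auto

lemma bdd0: fixes X :: "real set" shows "(\<And>x. x \<in> X \<Longrightarrow> 0 \<le> x) \<Longrightarrow> bdd_below X"
  by (rule bdd_belowI[of _ 0]) auto

lemma inf_mult:
  fixes X Y :: "real set"
  assumes X: "X \<noteq> {}" "\<And>x. x \<in> X \<Longrightarrow> 0 \<le> x" and Y: "Y \<noteq> {}" "\<And>y. y \<in> Y \<Longrightarrow> 0 \<le> y"
    and c: "\<And>x y. x \<in> X \<Longrightarrow> y \<in> Y \<Longrightarrow> c \<le> x * y"
  shows "c \<le> Inf X * Inf Y"
proof (rule ccontr)
  define a where "a = Inf X"
  define b where "b = Inf Y"
  have a0: "0 \<le> a" unfolding a_def using X by (rule inf_nonneg)
  have b0: "0 \<le> b" unfolding b_def using Y by (rule inf_nonneg)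
  assume "\<not> ?thesis" then have lt: "a * b < c" unfolding a_def b_def by simp
  define e where "e = min 1 ((c - a * b) / (a + b + 2))"
  have e0: "0 < e" unfolding e_def using lt a0 b0 by auto
  have e1: "e \<le> 1" unfolding e_def by simp
  have e2: "e * (a + b + 2) \<le> c - a * b"
  proof -
    have "e \<le> (c - a * b) / (a + b + 2)" unfolding e_def by simp
    then show ?thesis using a0 b0 by (simp add: pos_le_divide_eq)
  qed
  have "(a + e) * (b + e) = a * b + e * (a + b + e)" by (simp add: algebra_simps)
  also have "e * (a + b + e) < e * (a + b + 2)" using e0 e1 by (intro mult_strict_left_mono) auto
  finally have ab: "(a + e) * (b + e) < c" using e2 by linarith
  obtain x where x: "x \<in> X" "x < a + e" using cInf_lessD[OF X(1), of "a + e"] e0 unfolding a_def by auto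
  obtain y where y: "y \<in> Y" "y < b + e" using cInf_lessD[OF Y(1), of "b + e"] e0 unfolding b_def by auto
  have "x * y \<le> (a + e) * (b + e)" using x y X(2)[OF x(1)] Y(2)[OF y(1)] by (intro mult_mono) auto
  then show False using c[OF x(1) y(1)] ab by linarith
qed

lemma inf_scale_le:
  fixes X :: "real set"
  assumes "X \<noteq> {}" "bdd_below X" "0 \<le> k" "\<And>x. x \<in> X \<Longrightarrow> c \<le> k * x"
  shows "c \<le> k * Inf X"
proof (cases "k = 0")
  case True
  then obtain x where "x \<in> X" using assms(1) by auto
  then show ?thesis using assms(4) True by fastforce
next
  case False
  then have k: "0 < k" using assms(3) by auto
  have "c / k \<le> Inf X"
    using assms(1) by (rule cInf_greatest) (use assms(4) k in \<open>simp add: divide_le_eq mult.commute\<close>)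
  then show ?thesis using k by (simp add: divide_le_eq mult.commute)
qed

lemma inf_scale_eq:
  fixes g :: "'i \<Rightarrow> real"
  assumes "I \<noteq> {}" "\<And>i. i \<in> I \<Longrightarrow> 0 \<le> g i" "0 \<le> k"
  shows "Inf ((\<lambda>i. k * g i) ` I) = k * Inf (g ` I)"
proof (rule antisym)
  have b1: "bdd_below ((\<lambda>i. k * g i) ` I)" using assms by (intro bdd0) auto
  have b2: "bdd_below (g ` I)" using assms by (intro bdd0) auto
  show "Inf ((\<lambda>i. k * g i) ` I) \<le> k * Inf (g ` I)"
  proof (rule inf_scale_le)
    show "g ` I \<noteq> {}" using assms(1) by simp
    show "bdd_below (g ` I)" by (rule b2)
    show "0 \<le> k" by (rule assms(3))
    fix x assume "x \<in> g ` I" then obtain i where "i \<in> I" "x = g i" by auto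
    then show "Inf ((\<lambda>i. k * g i) ` I) \<le> k * x" by (auto intro: cInf_lower[OF _ b1])
  qed
  show "k * Inf (g ` I) \<le> Inf ((\<lambda>i. k * g i) ` I)"
    using assms(1) by (intro cInf_greatest) (auto intro!: mult_left_mono cInf_lower[OF _ b2] assms(3))
qed

context
  fixes Bb :: "'r::comm_ring_1 set" and H :: "'r \<Rightarrow> real"
  assumes Bone: "1 \<in> Bb" and Bzero: "0 \<in> Bb" and Bmc: "\<And>a b. a \<in> Bb \<Longrightarrow> b \<in> Bb \<Longrightarrow> a * b \<in> Bb"
    and Hm: "\<And>a b. a \<in> Bb \<Longrightarrow> b \<in> Bb \<Longrightarrow> H (a * b) = H a * H b"
    and Hnn: "\<And>b. b \<in> Bb \<Longrightarrow> 0 \<le> H b" and H0: "H 0 = 0" and H1: "H 1 = 1"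
begin

definition SN :: "('r \<Rightarrow> real) set" where
  "SN = {\<rho>. (\<forall>x. 0 \<le> \<rho> x) \<and> \<rho> 1 = 1 \<and> (\<forall>a b. \<rho> (a + b) \<le> max (\<rho> a) (\<rho> b)) \<and>
     (\<forall>a b. \<rho> (a * b) \<le> \<rho> a * \<rho> b) \<and> (\<forall>b\<in>Bb. \<forall>x. \<rho> (b * x) = H b * \<rho> x)}"

lemma SNI:
  assumes "\<And>x. 0 \<le> \<rho> x" "\<rho> 1 = 1" "\<And>a b. \<rho> (a + b) \<le> max (\<rho> a) (\<rho> b)"
    "\<And>a b. \<rho> (a * b) \<le> \<rho> a * \<rho> b" "\<And>b x. b \<in> Bb \<Longrightarrow> \<rho> (b * x) = H b * \<rho> x"
  shows "\<rho> \<in> SN"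
  using assms unfolding SN_def by auto

lemma SND:
  assumes "\<rho> \<in> SN"
  shows "\<And>x. 0 \<le> \<rho> x" "\<rho> 1 = 1" "\<And>a b. \<rho> (a + b) \<le> max (\<rho> a) (\<rho> b)"
    "\<And>a b. \<rho> (a * b) \<le> \<rho> a * \<rho> b" "\<And>b x. b \<in> Bb \<Longrightarrow> \<rho> (b * x) = H b * \<rho> x"
  using assms unfolding SN_def by auto

lemma SN_0: "\<rho> \<in> SN \<Longrightarrow> \<rho> 0 = 0"
  using SND(5)[of \<rho> 0 0] Bzero H0 by simp

lemma Bpow: "b \<in> Bb \<Longrightarrow> b ^ n \<in> Bb \<and> H (b ^ n) = H b ^ n"
  by (induction n) (auto simp: Bone Bmc Hm H1)

lemma SN_pow_le: assumes r: "\<rho> \<in> SN" shows "\<rho> (g ^ n) \<le> \<rho> g ^ n"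
proof (induction n)
  case 0 then show ?case using SND(2)[OF r] by simp
next
  case (Suc n)
  have "\<rho> (g ^ Suc n) \<le> \<rho> g * \<rho> (g ^ n)" using SND(4)[OF r] by simp
  also have "\<dots> \<le> \<rho> g * \<rho> g ^ n" using Suc SND(1)[OF r] by (intro mult_left_mono) auto
  finally show ?case by simp
qed

lemma SN_pow_add: "\<rho> \<in> SN \<Longrightarrow> \<rho> (g ^ (m + n)) \<le> \<rho> (g ^ m) * \<rho> (g ^ n)"
  using SND(4) by (simp add: power_add)

lemma SN_pow_mult: "\<rho> \<in> SN \<Longrightarrow> \<rho> (g ^ (m * n)) \<le> \<rho> (g ^ m) ^ n"
  using SN_pow_le[of \<rho> "g ^ m" n] by (simp add: power_mult)

lemma SN_sum: assumes r: "\<rho> \<in> SN" shows "finite K \<Longrightarrow> (\<And>k. k \<in> K \<Longrightarrow> \<rho> (x k) \<le> B) \<Longrightarrow> 0 \<le> B \<Longrightarrow> \<rho> (sum x K) \<le> B"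
proof (induction K rule: finite_induct)
  case empty then show ?case using SN_0[OF r] by simp
next
  case (insert k K)
  have "\<rho> (sum x (insert k K)) \<le> max (\<rho> (x k)) (\<rho> (sum x K))"
    using insert(1,2) SND(3)[OF r] by simp
  moreover have "\<rho> (x k) \<le> B" using insert.prems(1) by simp
  moreover have "\<rho> (sum x K) \<le> B" using insert.IH insert.prems by simp
  ultimately show ?case by simp
qed

lemma SN_ofnat: assumes r: "\<rho> \<in> SN" shows "\<rho> (of_nat m * x) \<le> \<rho> x"
proof (induction m)
  case 0 then show ?case using SN_0[OF r] SND(1)[OF r] by simp
next
  case (Suc m)
  have "\<rho> (of_nat (Suc m) * x) = \<rho> (x + of_nat m * x)" by (simp add: algebra_simps)
  also have "\<dots> \<le> max (\<rho> x) (\<rho> (of_nat m * x))" using SND(3)[OF r] by blast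
  finally show ?case using Suc by simp
qed

definition sp :: "('r \<Rightarrow> real) \<Rightarrow> 'r \<Rightarrow> real" where
  "sp \<rho> g = Inf ((\<lambda>n. root n (\<rho> (g ^ n))) ` {1..})"

lemma sp_bdd: "\<rho> \<in> SN \<Longrightarrow> bdd_below ((\<lambda>n. root n (\<rho> (g ^ n))) ` {1..})"
  by (rule bdd0) (auto intro: real_root_ge_zero SND(1))

lemma sp_low: "\<rho> \<in> SN \<Longrightarrow> 1 \<le> n \<Longrightarrow> sp \<rho> g \<le> root n (\<rho> (g ^ n))"
  unfolding sp_def by (rule cInf_lower[OF _ sp_bdd]) auto

lemma sp_great: "(\<And>n. 1 \<le> n \<Longrightarrow> c \<le> root n (\<rho> (g ^ n))) \<Longrightarrow> c \<le> sp \<rho> g"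
  unfolding sp_def by (rule cInf_greatest) auto

lemma sp_nonneg: "\<rho> \<in> SN \<Longrightarrow> 0 \<le> sp \<rho> g"
  by (rule sp_great) (auto intro: real_root_ge_zero SND(1))

lemma sp_le: "\<rho> \<in> SN \<Longrightarrow> sp \<rho> g \<le> \<rho> g"
  using sp_low[of \<rho> 1 g] by simp

lemma root_mult_pow: "0 < n \<Longrightarrow> 0 < m \<Longrightarrow> 0 \<le> x \<Longrightarrow> root (n * m) (x ^ m) = root n x"
  by (simp add: real_root_mult_exp real_root_power_cancel)

lemma sp_dir: assumes "\<rho> \<in> SN" "1 \<le> n" "1 \<le> m"
  shows "root (n * m) (\<rho> (g ^ (n * m))) \<le> root n (\<rho> (g ^ n))"
proof -
  have "root (n * m) (\<rho> (g ^ (n * m))) \<le> root (n * m) (\<rho> (g ^ n) ^ m)"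
    using assms SN_pow_mult[OF assms(1)] by (subst real_root_le_iff) auto
  also have "\<dots> = root n (\<rho> (g ^ n))" using assms SND(1)[OF assms(1)] by (intro root_mult_pow) auto
  finally show ?thesis .
qed

lemma sp_one: "\<rho> \<in> SN \<Longrightarrow> sp \<rho> 1 = 1"
proof (rule antisym)
  assume r: "\<rho> \<in> SN"
  show "sp \<rho> 1 \<le> 1" using sp_le[OF r, of 1] SND(2)[OF r] by simp
  show "1 \<le> sp \<rho> 1" by (rule sp_great) (use SND(2)[OF r] in simp)
qed

lemma sp_scal: assumes r: "\<rho> \<in> SN" and b: "b \<in> Bb" shows "sp \<rho> (b * x) = H b * sp \<rho> x"
proof -
  have "(\<lambda>n. root n (\<rho> ((b * x) ^ n))) ` {1..} = (\<lambda>n. H b * root n (\<rho> (x ^ n))) ` {1..}"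
  proof (rule image_cong[OF HOL.refl])
    fix n :: nat assume n: "n \<in> {1..}"
    have "\<rho> ((b * x) ^ n) = H b ^ n * \<rho> (x ^ n)"
      using SND(5)[OF r Bpow[OF b, THEN conjunct1], of n "x ^ n"] Bpow[OF b, of n] by (simp add: power_mult_distrib)
    then show "root n (\<rho> ((b * x) ^ n)) = H b * root n (\<rho> (x ^ n))"
      using n Hnn[OF b] by (simp add: real_root_mult real_root_power_cancel)
  qed
  then show ?thesis unfolding sp_def
    using inf_scale_eq[of "{1::nat..}" "\<lambda>n. root n (\<rho> (x ^ n))" "H b"] Hnn[OF b]
    by (auto intro: real_root_ge_zero SND(1)[OF r])
qed

lemma sp_mul: assumes r: "\<rho> \<in> SN" shows "sp \<rho> (a * b) \<le> sp \<rho> a * sp \<rho> b"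
  unfolding sp_def[of \<rho> a] sp_def[of \<rho> b]
proof (rule inf_mult)
  show "(\<lambda>n. root n (\<rho> (a ^ n))) ` {1..} \<noteq> {}" "(\<lambda>n. root n (\<rho> (b ^ n))) ` {1..} \<noteq> {}" by auto
  show "\<And>x. x \<in> (\<lambda>n. root n (\<rho> (a ^ n))) ` {1..} \<Longrightarrow> 0 \<le> x" "\<And>x. x \<in> (\<lambda>n. root n (\<rho> (b ^ n))) ` {1..} \<Longrightarrow> 0 \<le> x"
    by (auto intro: real_root_ge_zero SND(1)[OF r])
  fix x y assume "x \<in> (\<lambda>n. root n (\<rho> (a ^ n))) ` {1..}" "y \<in> (\<lambda>n. root n (\<rho> (b ^ n))) ` {1..}"
  then obtain n m :: nat where nm: "1 \<le> n" "1 \<le> m" "x = root n (\<rho> (a ^ n))" "y = root m (\<rho> (b ^ m))" by auto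
  have "sp \<rho> (a * b) \<le> root (n * m) (\<rho> ((a * b) ^ (n * m)))" using nm by (intro sp_low[OF r]) auto
  also have "\<dots> \<le> root (n * m) (\<rho> (a ^ (n * m)) * \<rho> (b ^ (n * m)))"
    using nm SND(4)[OF r] by (subst real_root_le_iff) (auto simp: power_mult_distrib)
  also have "\<dots> = root (n * m) (\<rho> (a ^ (n * m))) * root (m * n) (\<rho> (b ^ (m * n)))"
    by (simp add: real_root_mult mult.commute)
  also have "\<dots> \<le> x * y"
    using nm sp_dir[OF r, of n m a] sp_dir[OF r, of m n b]
    by (intro mult_mono) (auto intro: real_root_ge_zero SND(1)[OF r])
  finally show "sp \<rho> (a * b) \<le> x * y" .
qed

lemma fekete_light:
  assumes r: "\<rho> \<in> SN" and e: "0 < e"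
  shows "\<exists>C\<ge>0. \<forall>k. \<rho> (g ^ k) \<le> C * (sp \<rho> g + e) ^ k"
proof -
  define q where "q = sp \<rho> g + e"
  have q0: "0 < q" unfolding q_def using sp_nonneg[OF r, of g] e by simp
  have "Inf ((\<lambda>n. root n (\<rho> (g ^ n))) ` {1..}) < q" unfolding q_def sp_def[symmetric] using e by simp
  then obtain N where N: "1 \<le> N" "root N (\<rho> (g ^ N)) < q" using cInf_lessD[of "(\<lambda>n. root n (\<rho> (g ^ n))) ` {1..}" q] by auto
  have gN: "\<rho> (g ^ N) \<le> q ^ N"
  proof -
    have "\<rho> (g ^ N) = root N (\<rho> (g ^ N)) ^ N" using N(1) SND(1)[OF r] by simp
    also have "\<dots> \<le> q ^ N" using N by (intro power_mono) (auto intro: real_root_ge_zero SND(1)[OF r])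
    finally show ?thesis .
  qed
  define C where "C = Max ((\<lambda>j. \<rho> (g ^ j) / q ^ j) ` {..<N})"
  have Cge: "\<rho> (g ^ j) / q ^ j \<le> C" if "j < N" for j unfolding C_def using that by (intro Max_ge) auto
  have C0: "0 \<le> C" using Cge[of 0] N q0 SND(1)[OF r, of 1] by (auto intro: order_trans[OF _ Cge[of 0]])
  have "\<rho> (g ^ k) \<le> C * q ^ k" for k
  proof -
    define d where "d = k div N"
    define j where "j = k mod N"
    have k: "k = N * d + j" unfolding d_def j_def by simp
    have jN: "j < N" unfolding j_def using N by simp
    have "\<rho> (g ^ k) \<le> \<rho> (g ^ (N * d)) * \<rho> (g ^ j)" unfolding k by (rule SN_pow_add[OF r])
    also have "\<dots> \<le> (q ^ N) ^ d * (C * q ^ j)"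
    proof (intro mult_mono)
      show "\<rho> (g ^ (N * d)) \<le> (q ^ N) ^ d"
        using SN_pow_mult[OF r, of g N d] power_mono[OF gN SND(1)[OF r], of d] by linarith
      show "\<rho> (g ^ j) \<le> C * q ^ j" using Cge[OF jN] q0 by (simp add: divide_le_eq)
      show "0 \<le> (q ^ N) ^ d" using q0 by simp
      show "0 \<le> \<rho> (g ^ j)" by (rule SND(1)[OF r])
    qed
    also have "\<dots> = C * q ^ k" unfolding k by (simp add: power_add power_mult)
    finally show ?thesis .
  qed
  then show ?thesis using C0 unfolding q_def by blast
qed

lemma sp_add: assumes r: "\<rho> \<in> SN" shows "sp \<rho> (a + b) \<le> max (sp \<rho> a) (sp \<rho> b)"
proof (rule field_le_epsilon)
  fix e :: real assume e: "0 < e"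
  obtain Ca where Ca: "Ca \<ge> 0" "\<And>k. \<rho> (a ^ k) \<le> Ca * (sp \<rho> a + e) ^ k" using fekete_light[OF r e] by blast
  obtain Cb where Cb: "Cb \<ge> 0" "\<And>k. \<rho> (b ^ k) \<le> Cb * (sp \<rho> b + e) ^ k" using fekete_light[OF r e] by blast
  define M where "M = max (sp \<rho> a) (sp \<rho> b) + e"
  have M0: "0 \<le> M" unfolding M_def using sp_nonneg[OF r, of a] e by simp
  have bound: "\<rho> ((a + b) ^ n) \<le> (Ca * Cb) * M ^ n" for n
  proof -
    have "\<rho> ((a + b) ^ n) = \<rho> (\<Sum>k\<le>n. of_nat (n choose k) * a ^ k * b ^ (n - k))" by (simp add: binomial_ring)
    also have "\<dots> \<le> (Ca * Cb) * M ^ n"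
    proof (rule SN_sum[OF r])
      show "0 \<le> Ca * Cb * M ^ n" using Ca Cb M0 by simp
      fix k assume k: "k \<in> {..n}"
      have "\<rho> (of_nat (n choose k) * a ^ k * b ^ (n - k)) \<le> \<rho> (a ^ k * b ^ (n - k))"
        using SN_ofnat[OF r, of "n choose k" "a ^ k * b ^ (n - k)"] by (simp add: mult.assoc)
      also have "\<dots> \<le> \<rho> (a ^ k) * \<rho> (b ^ (n - k))" by (rule SND(4)[OF r])
      also have "\<dots> \<le> (Ca * (sp \<rho> a + e) ^ k) * (Cb * (sp \<rho> b + e) ^ (n - k))"
        using Ca Cb SND(1)[OF r] sp_nonneg[OF r, of a] sp_nonneg[OF r, of b] e by (intro mult_mono) auto
      also have "\<dots> \<le> (Ca * M ^ k) * (Cb * M ^ (n - k))"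
        using Ca Cb sp_nonneg[OF r, of a] sp_nonneg[OF r, of b] e M0
        by (intro mult_mono mult_left_mono power_mono) (auto simp: M_def)
      also have "\<dots> = (Ca * Cb) * M ^ n" using k by (simp add: algebra_simps power_add[symmetric])
      finally show "\<rho> (of_nat (n choose k) * a ^ k * b ^ (n - k)) \<le> Ca * Cb * M ^ n" .
    qed (simp)
    finally show ?thesis .
  qed
  have le: "sp \<rho> (a + b) \<le> root n (Ca * Cb) * M" if "1 \<le> n" for n
  proof -
    have "sp \<rho> (a + b) \<le> root n (\<rho> ((a + b) ^ n))" using that by (rule sp_low[OF r])
    also have "\<dots> \<le> root n ((Ca * Cb) * M ^ n)" using that bound by (subst real_root_le_iff) auto
    also have "\<dots> = root n (Ca * Cb) * M" using that M0 by (simp add: real_root_mult real_root_power_cancel)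
    finally show ?thesis .
  qed
  have "sp \<rho> (a + b) \<le> M"
  proof (cases "Ca * Cb = 0")
    case True then show ?thesis using le[of 1] M0 by (cases "Ca = 0") auto
  next
    case False
    then have "0 < Ca * Cb" using Ca Cb by simp
    then have "(\<lambda>n. root n (Ca * Cb) * M) \<longlonglongrightarrow> 1 * M" by (intro tendsto_mult LIMSEQ_root_const tendsto_const)
    then have "sp \<rho> (a + b) \<le> 1 * M" by (rule LIMSEQ_le_const) (use le in \<open>auto intro!: exI[of _ 1]\<close>)
    then show ?thesis by simp
  qed
  then show "sp \<rho> (a + b) \<le> max (sp \<rho> a) (sp \<rho> b) + e" unfolding M_def .
qed

lemma sp_SN: "\<rho> \<in> SN \<Longrightarrow> sp \<rho> \<in> SN"
  by (rule SNI) (auto intro: sp_nonneg sp_one sp_add sp_mul sp_scal)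

definition isMin :: "('r \<Rightarrow> real) \<Rightarrow> bool" where
  "isMin \<rho> \<longleftrightarrow> \<rho> \<in> SN \<and> (\<forall>\<rho>'\<in>SN. (\<forall>x. \<rho>' x \<le> \<rho> x) \<longrightarrow> \<rho>' = \<rho>)"

lemma min_powmult: assumes m: "isMin \<rho>" shows "\<rho> (g ^ n) = \<rho> g ^ n"
proof -
  have r: "\<rho> \<in> SN" using m unfolding isMin_def by auto
  have sp: "sp \<rho> = \<rho>" using m sp_SN[OF r] sp_le[OF r] unfolding isMin_def by blast
  show ?thesis
  proof (cases "n = 0")
    case True then show ?thesis using SND(2)[OF r] by simp
  next
    case False
    have "\<rho> g \<le> root n (\<rho> (g ^ n))" using sp_low[OF r, of n g] False sp by simp
    then have "\<rho> g ^ n \<le> root n (\<rho> (g ^ n)) ^ n" using SND(1)[OF r] by (intro power_mono) auto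
    also have "\<dots> = \<rho> (g ^ n)" using False SND(1)[OF r] by simp
    finally show ?thesis using SN_pow_le[OF r, of g n] by simp
  qed
qed

lemma min_mult: assumes m: "isMin \<rho>" shows "\<rho> (a * b) = \<rho> a * \<rho> b"
proof -
  have r: "\<rho> \<in> SN" using m unfolding isMin_def by auto
  show ?thesis
  proof (cases "\<rho> a = 0")
    case True
    then show ?thesis using SND(4)[OF r, of a b] SND(1)[OF r, of "a * b"] by simp
  next
    case False
    define c where "c = \<rho> a"
    have c0: "0 < c" using False SND(1)[OF r, of a] unfolding c_def by simp
    define A where "A = (\<lambda>g n. \<rho> (a ^ n * g) / c ^ n)"
    define pf where "pf = (\<lambda>g. Inf (range (A g)))"
    have A0: "0 \<le> A g n" for g n unfolding A_def using SND(1)[OF r] c0 by simp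
    have bdd: "bdd_below (range (A g))" for g using A0 by (intro bdd0) auto
    have Adec: "A g (Suc n) \<le> A g n" for g n
    proof -
      have "\<rho> (a ^ Suc n * g) \<le> c * \<rho> (a ^ n * g)" using SND(4)[OF r, of a "a ^ n * g"] unfolding c_def by (simp add: mult.assoc)
      then show ?thesis unfolding A_def using c0 by (simp add: divide_le_eq field_simps)
    qed
    have Amono: "n \<le> m \<Longrightarrow> A g m \<le> A g n" for g n m
      using decseqD[OF decseq_SucI[of "A g"]] Adec by blast
    have pfdef: "pf g = Inf (range (A g))" for g by (simp add: pf_def)
    have pf_low: "pf g \<le> A g n" for g n unfolding pf_def by (rule cInf_lower[OF _ bdd]) auto
    have pf_SN: "pf \<in> SN"
    proof (rule SNI)
      show "0 \<le> pf x" for x unfolding pf_def by (rule inf_nonneg) (auto intro: A0)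
      have "range (A 1) = {1}" unfolding A_def using min_powmult[OF m] c0 unfolding c_def by auto
      then show "pf 1 = 1" unfolding pf_def by simp
      show "pf (x + y) \<le> max (pf x) (pf y)" for x y
        unfolding pfdef[of x] pfdef[of y]
      proof (rule inf_max)
        fix s t assume "s \<in> range (A x)" "t \<in> range (A y)"
        then obtain n n' where st: "s = A x n" "t = A y n'" by auto
        define k where "k = max n n'"
        have "pf (x + y) \<le> A (x + y) k" by (rule pf_low)
        also have "\<dots> \<le> max (A x k) (A y k)"
        proof -
          have "\<rho> (a ^ k * (x + y)) \<le> max (\<rho> (a ^ k * x)) (\<rho> (a ^ k * y))"
            using SND(3)[OF r] by (simp add: distrib_left)
          then have "\<rho> (a ^ k * (x + y)) / c ^ k \<le> max (\<rho> (a ^ k * x)) (\<rho> (a ^ k * y)) / c ^ k"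
            using c0 by (intro divide_right_mono) auto
          moreover have "max (\<rho> (a ^ k * x)) (\<rho> (a ^ k * y)) / c ^ k = max (\<rho> (a ^ k * x) / c ^ k) (\<rho> (a ^ k * y) / c ^ k)"
            using c0 by (simp add: max_divide_distrib_right)
          ultimately show ?thesis unfolding A_def by simp
        qed
        also have "\<dots> \<le> max s t" using Amono[of n k x] Amono[of n' k y] st unfolding k_def by auto
        finally show "pf (x + y) \<le> max s t" .
      qed (auto intro: bdd)
      show "pf (x * y) \<le> pf x * pf y" for x y
        unfolding pfdef[of x] pfdef[of y]
      proof (rule inf_mult)
        fix s t assume "s \<in> range (A x)" "t \<in> range (A y)"
        then obtain n n' where st: "s = A x n" "t = A y n'" by auto
        define k where "k = max n n'"
        have "pf (x * y) \<le> A (x * y) (k + k)" by (rule pf_low)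
        also have "\<dots> \<le> A x k * A y k"
        proof -
          have "\<rho> (a ^ (k + k) * (x * y)) = \<rho> ((a ^ k * x) * (a ^ k * y))"
            by (simp add: power_add algebra_simps)
          also have "\<dots> \<le> \<rho> (a ^ k * x) * \<rho> (a ^ k * y)" by (rule SND(4)[OF r])
          finally show ?thesis unfolding A_def using c0 by (simp add: power_add divide_right_mono)
        qed
        also have "\<dots> \<le> s * t" using Amono[of n k x] Amono[of n' k y] st A0 unfolding k_def
          by (intro mult_mono) auto
        finally show "pf (x * y) \<le> s * t" .
      qed (auto intro: A0)
      show "pf (b * x) = H b * pf x" if b: "b \<in> Bb" for b x
      proof -
        have "range (A (b * x)) = (\<lambda>n. H b * A x n) ` UNIV"
        proof (rule image_cong[OF HOL.refl])
          fix n
          have eq: "a ^ n * (b * x) = b * (a ^ n * x)" by (simp add: algebra_simps)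
          show "A (b * x) n = H b * A x n" unfolding A_def eq SND(5)[OF r b, of "a ^ n * x"] by simp
        qed
        then show ?thesis unfolding pf_def using inf_scale_eq[of UNIV "A x" "H b"] Hnn[OF b] A0 by auto
      qed
    qed
    have "\<forall>x. pf x \<le> \<rho> x" using pf_low[of _ 0] unfolding A_def by auto
    then have pfe: "pf = \<rho>" using m pf_SN unfolding isMin_def by blast
    have "\<rho> b \<le> \<rho> (a * b) / c" using pf_low[of b 1] unfolding pfe A_def by simp
    then have "\<rho> a * \<rho> b \<le> \<rho> (a * b)" using c0 unfolding c_def by (simp add: le_divide_eq mult.commute)
    then show ?thesis using SND(4)[OF r, of a b] by simp
  qed
qed

lemma chain_inf_SN:
  assumes C: "C \<subseteq> SN" "C \<noteq> {}" and ch: "\<And>\<rho>1 \<rho>2. \<rho>1 \<in> C \<Longrightarrow> \<rho>2 \<in> C \<Longrightarrow> (\<forall>t. \<rho>1 t \<le> \<rho>2 t) \<or> (\<forall>t. \<rho>2 t \<le> \<rho>1 t)"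
  shows "(\<lambda>t. Inf ((\<lambda>\<rho>. \<rho> t) ` C)) \<in> SN"
proof -
  let ?u = "\<lambda>t. Inf ((\<lambda>\<rho>. \<rho> t) ` C)"
  have nn: "0 \<le> \<rho> t" if "\<rho> \<in> C" for \<rho> t using that C SND(1) by blast
  have bdd: "bdd_below ((\<lambda>\<rho>. \<rho> t) ` C)" for t using nn by (intro bdd0) auto
  have low: "?u t \<le> \<rho> t" if "\<rho> \<in> C" for \<rho> t using that by (intro cInf_lower[OF _ bdd]) auto
  show ?thesis
  proof (rule SNI)
    show "0 \<le> ?u x" for x using C(2) by (intro inf_nonneg) (auto intro: nn)
    have "(\<lambda>\<rho>. \<rho> 1) ` C = (\<lambda>\<rho>. 1) ` C" using C SND(2) by (intro image_cong) auto
    then have "(\<lambda>\<rho>. \<rho> 1) ` C = {1}" using C(2) by (simp add: image_constant_conv)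
    then show "?u 1 = 1" by simp
    show "?u (a + b) \<le> max (?u a) (?u b)" for a b
    proof (rule inf_max)
      fix s t assume "s \<in> (\<lambda>\<rho>. \<rho> a) ` C" "t \<in> (\<lambda>\<rho>. \<rho> b) ` C"
      then obtain \<rho>1 \<rho>2 where p: "\<rho>1 \<in> C" "\<rho>2 \<in> C" "s = \<rho>1 a" "t = \<rho>2 b" by auto
      have r1: "\<rho>1 \<in> SN" and r2: "\<rho>2 \<in> SN" using p C by auto
      show "?u (a + b) \<le> max s t"
        using ch[OF p(1,2)]
      proof
        assume le: "\<forall>t. \<rho>1 t \<le> \<rho>2 t"
        have "?u (a + b) \<le> \<rho>1 (a + b)" by (rule low[OF p(1)])
        also have "\<dots> \<le> max (\<rho>1 a) (\<rho>1 b)" by (rule SND(3)[OF r1])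
        also have "\<dots> \<le> max s t" using le p by (intro max.mono) auto
        finally show ?thesis .
      next
        assume le: "\<forall>t. \<rho>2 t \<le> \<rho>1 t"
        have "?u (a + b) \<le> \<rho>2 (a + b)" by (rule low[OF p(2)])
        also have "\<dots> \<le> max (\<rho>2 a) (\<rho>2 b)" by (rule SND(3)[OF r2])
        also have "\<dots> \<le> max s t" using le p by (intro max.mono) auto
        finally show ?thesis .
      qed
    qed (use C(2) bdd in auto)
    show "?u (a * b) \<le> ?u a * ?u b" for a b
    proof (rule inf_mult)
      fix s t assume "s \<in> (\<lambda>\<rho>. \<rho> a) ` C" "t \<in> (\<lambda>\<rho>. \<rho> b) ` C"
      then obtain \<rho>1 \<rho>2 where p: "\<rho>1 \<in> C" "\<rho>2 \<in> C" "s = \<rho>1 a" "t = \<rho>2 b" by auto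
      have r1: "\<rho>1 \<in> SN" and r2: "\<rho>2 \<in> SN" using p C by auto
      show "?u (a * b) \<le> s * t"
        using ch[OF p(1,2)]
      proof
        assume le: "\<forall>t. \<rho>1 t \<le> \<rho>2 t"
        have "?u (a * b) \<le> \<rho>1 (a * b)" by (rule low[OF p(1)])
        also have "\<dots> \<le> \<rho>1 a * \<rho>1 b" by (rule SND(4)[OF r1])
        also have "\<dots> \<le> s * t" using le p nn by (intro mult_mono) auto
        finally show ?thesis .
      next
        assume le: "\<forall>t. \<rho>2 t \<le> \<rho>1 t"
        have "?u (a * b) \<le> \<rho>2 (a * b)" by (rule low[OF p(2)])
        also have "\<dots> \<le> \<rho>2 a * \<rho>2 b" by (rule SND(4)[OF r2])
        also have "\<dots> \<le> s * t" using le p nn by (intro mult_mono) auto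
        finally show ?thesis .
      qed
    qed (use C(2) nn in auto)
    show "?u (b * x) = H b * ?u x" if b: "b \<in> Bb" for b x
    proof -
      have "(\<lambda>\<rho>. \<rho> (b * x)) ` C = (\<lambda>\<rho>. H b * \<rho> x) ` C" using C SND(5) b by force
      then show ?thesis using inf_scale_eq[of C "\<lambda>\<rho>. \<rho> x" "H b"] C(2) nn Hnn[OF b] by auto
    qed
  qed
qed

lemma exists_min: assumes "\<rho>0 \<in> SN" shows "\<exists>\<rho>. isMin \<rho>"
proof -
  define R where "R = {(x, y). x \<in> SN \<and> y \<in> SN \<and> (\<forall>t. y t \<le> x t)}"
  have F: "Field R = SN" unfolding R_def Field_def by auto
  have po: "Partial_order R"
    unfolding partial_order_on_def preorder_on_def refl_on_def trans_on_def antisym_on_def F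
    unfolding R_def by (auto simp: fun_eq_iff intro: order_trans antisym)
  have "\<exists>m\<in>Field R. \<forall>a\<in>Field R. (m, a) \<in> R \<longrightarrow> a = m"
  proof (rule Zorns_po_lemma[OF po])
    fix C assume C: "C \<in> Chains R"
    show "\<exists>u\<in>Field R. \<forall>a\<in>C. (a, u) \<in> R"
    proof (cases "C = {}")
      case True then show ?thesis using assms F by auto
    next
      case False
      have CS: "C \<subseteq> SN" using C unfolding Chains_def R_def by auto
      have ch: "(\<forall>t. \<rho>1 t \<le> \<rho>2 t) \<or> (\<forall>t. \<rho>2 t \<le> \<rho>1 t)" if "\<rho>1 \<in> C" "\<rho>2 \<in> C" for \<rho>1 \<rho>2
        using C that unfolding Chains_def R_def by auto
      let ?u = "\<lambda>t. Inf ((\<lambda>\<rho>. \<rho> t) ` C)"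
      have uS: "?u \<in> SN" by (rule chain_inf_SN[OF CS False ch])
      have "(a, ?u) \<in> R" if "a \<in> C" for a
      proof -
        have "\<forall>t. ?u t \<le> a t" using that CS SND(1)
          by (auto intro!: cInf_lower bdd0)
        then show ?thesis using uS that CS unfolding R_def by auto
      qed
      then show ?thesis using uS F by auto
    qed
  qed
  then obtain m where m: "m \<in> SN" "\<forall>a\<in>SN. (m, a) \<in> R \<longrightarrow> a = m" unfolding F by blast
  have "isMin m" unfolding isMin_def using m unfolding R_def by auto
  then show ?thesis by blast
qed

end



lemma fmax_nonneg: "0 \<le> fmax w bs"
  by (induction bs) auto

lemma fmax_append: "fmax w (bs @ cs) = max (fmax w bs) (fmax w cs)"
  by (induction bs) (auto simp: fmax_nonneg max.assoc max_absorb2)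

lemma fmax_ge: "b \<in> set bs \<Longrightarrow> w b \<le> fmax w bs"
  by (induction bs) auto

lemma fmax_le: "(\<And>b. b \<in> set bs \<Longrightarrow> w b \<le> B) \<Longrightarrow> 0 \<le> B \<Longrightarrow> fmax w bs \<le> B"
  by (induction bs) auto

definition prodl :: "'r::comm_ring_1 list \<Rightarrow> 'r list \<Rightarrow> 'r list" where
  "prodl bs cs = concat (map (\<lambda>b. map (\<lambda>c. b * c) cs) bs)"

lemma prodl_sum: "sum_list (prodl bs cs) = sum_list bs * sum_list cs"
  unfolding prodl_def by (induction bs) (auto simp: distrib_right sum_list_const_mult)

lemma prodl_set: "x \<in> set (prodl bs cs) \<Longrightarrow> \<exists>b\<in>set bs. \<exists>c\<in>set cs. x = b * c"
  unfolding prodl_def by auto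

lemma Bb_good: assumes e: "k_algebra_map emb" and p: "monoid0_hom phi"
  shows "good emb (Bbullet emb phi)"
proof -
  have "1 \<in> Bbullet emb phi" unfolding Bbullet_def using e p
    by (auto simp: k_algebra_map_def monoid0_hom_def intro!: exI[of _ 1])
  moreover have "mulclosed (Bbullet emb phi)" unfolding mulclosed_def Bbullet_def
  proof (intro ballI)
    fix x y assume "x \<in> {emb c * phi a |c a. True}" "y \<in> {emb c * phi a |c a. True}"
    then obtain c a c' a' where "x = emb c * phi a" "y = emb c' * phi a'" by auto
    then have "x * y = emb (c * c') * phi (a * a')" using e p
      by (simp add: k_algebra_map_def monoid0_hom_def algebra_simps)
    then show "x * y \<in> {emb c * phi a |c a. True}" by auto
  qed
  moreover have "emb l * x \<in> Bbullet emb phi" if xB: "x \<in> Bbullet emb phi" for l x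
  proof -
    obtain c a where "x = emb c * phi a" using xB unfolding Bbullet_def by blast
    then have "emb l * x = emb (l * c) * phi a" using e by (simp add: k_algebra_map_def algebra_simps)
    then show ?thesis unfolding Bbullet_def by auto
  qed
  ultimately show ?thesis unfolding good_def by auto
qed

context
  fixes v :: "'k::field \<Rightarrow> real" and emb :: "'k \<Rightarrow> 'r::comm_ring_1"
    and phi :: "'a::{comm_monoid_mult,mult_zero,zero_neq_one} \<Rightarrow> 'r" and f
  assumes v: "nonarch_abs v" and e: "k_algebra_map emb" and p: "monoid0_hom phi"
    and s: "pi_surjective emb phi" and f: "f \<in> bend_hom v emb (Bbullet emb phi)"
begin

abbreviation "Bb \<equiv> Bbullet emb phi"
definition "HH b = f (tmono 1 b)"

lemma g: "good emb Bb" by (rule Bb_good[OF e p])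

lemma Bone: "1 \<in> Bb" using g unfolding good_def by auto
lemma Bmc: "a \<in> Bb \<Longrightarrow> b \<in> Bb \<Longrightarrow> a * b \<in> Bb" using g unfolding good_def mulclosed_def by auto
lemma Bsc: "c \<in> Bb \<Longrightarrow> emb l * c \<in> Bb" using g unfolding good_def by auto
lemma Bzero: "0 \<in> Bb" using Bsc[OF Bone, of 0] e by (simp add: k_algebra_map_def)
lemma Bphi: "phi a \<in> Bb"
proof -
  have "phi a = emb 1 * phi a" using e by (simp add: k_algebra_map_def)
  then show ?thesis unfolding Bbullet_def by blast
qed

lemma Hnn: "b \<in> Bb \<Longrightarrow> 0 \<le> HH b" unfolding HH_def by (rule H_nonneg[OF v g f])
lemma H1: "HH 1 = 1" unfolding HH_def by (rule H_one[OF v g f])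
lemma Hm: "a \<in> Bb \<Longrightarrow> b \<in> Bb \<Longrightarrow> HH (a * b) = HH a * HH b" unfolding HH_def by (rule H_mul[OF v g f])
lemma Hsc: "c \<in> Bb \<Longrightarrow> HH (emb l * c) = v l * HH c" unfolding HH_def by (rule H_scal[OF v g f])
lemma H0: "HH 0 = 0"
  using Hsc[OF Bone, of 0] e nonarchD(2)[OF v] by (simp add: k_algebra_map_def)
lemma Hord: "a \<in> Bb \<Longrightarrow> set bs \<subseteq> Bb \<Longrightarrow> a = sum_list bs \<Longrightarrow> HH a \<le> fmax HH bs"
  unfolding HH_def by (rule H_ord[OF v g f])

lemmas ctx = Bone Bzero Bmc Hm Hnn H0 H1

definition "Reps r = {bs. set bs \<subseteq> Bb \<and> sum_list bs = r}"
definition "rho0 r = Inf (fmax HH ` Reps r)"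

lemma Reps_ne: "Reps r \<noteq> {}"
proof -
  obtain S c where S: "finite S" "r = (\<Sum>a\<in>S. emb (c a) * phi a)" using s unfolding pi_surjective_def by blast
  obtain xs where xs: "set xs = S" "distinct xs" using finite_distinct_list[OF S(1)] by blast
  let ?bs = "map (\<lambda>a. emb (c a) * phi a) xs"
  have "sum_list ?bs = r" using S xs by (simp add: sum_list_distinct_conv_sum_set)
  moreover have "set ?bs \<subseteq> Bb" unfolding Bbullet_def by auto
  ultimately show ?thesis unfolding Reps_def by blast
qed

lemma R0_low: "bs \<in> Reps r \<Longrightarrow> rho0 r \<le> fmax HH bs"
  unfolding rho0_def by (rule cInf_lower) (auto intro: bdd0 fmax_nonneg)

lemma R0_great: "(\<And>bs. bs \<in> Reps r \<Longrightarrow> c \<le> fmax HH bs) \<Longrightarrow> c \<le> rho0 r"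
  unfolding rho0_def using Reps_ne by (intro cInf_greatest) auto

lemma R0_nonneg: "0 \<le> rho0 r"
  by (rule R0_great) (rule fmax_nonneg)

lemma R0_Bb: assumes b: "b \<in> Bb" shows "rho0 b = HH b"
proof (rule antisym)
  have "[b] \<in> Reps b" unfolding Reps_def using b by auto
  then show "rho0 b \<le> HH b" using R0_low[of "[b]" b] Hnn[OF b] by simp
  show "HH b \<le> rho0 b" by (rule R0_great) (use Hord b in \<open>auto simp: Reps_def\<close>)
qed

lemma R0_add: "rho0 (x + y) \<le> max (rho0 x) (rho0 y)"
  unfolding rho0_def[of x] rho0_def[of y]
proof (rule inf_max)
  fix s t assume "s \<in> fmax HH ` Reps x" "t \<in> fmax HH ` Reps y"
  then obtain bs cs where bc: "bs \<in> Reps x" "cs \<in> Reps y" "s = fmax HH bs" "t = fmax HH cs" by auto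
  have "bs @ cs \<in> Reps (x + y)" using bc unfolding Reps_def by auto
  then have "rho0 (x + y) \<le> fmax HH (bs @ cs)" by (rule R0_low)
  then show "rho0 (x + y) \<le> max s t" unfolding fmax_append bc(3,4) .
qed (use Reps_ne in \<open>auto intro: bdd0 fmax_nonneg\<close>)

lemma R0_mul: "rho0 (x * y) \<le> rho0 x * rho0 y"
  unfolding rho0_def[of x] rho0_def[of y]
proof (rule inf_mult)
  fix s t assume "s \<in> fmax HH ` Reps x" "t \<in> fmax HH ` Reps y"
  then obtain bs cs where bc: "bs \<in> Reps x" "cs \<in> Reps y" "s = fmax HH bs" "t = fmax HH cs" by auto
  have sb: "set bs \<subseteq> Bb" "set cs \<subseteq> Bb" using bc unfolding Reps_def by auto
  have "prodl bs cs \<in> Reps (x * y)" using bc prodl_sum unfolding Reps_def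
    by (auto dest!: prodl_set intro: Bmc)
  then have "rho0 (x * y) \<le> fmax HH (prodl bs cs)" by (rule R0_low)
  also have "\<dots> \<le> s * t"
  proof (rule fmax_le)
    show "0 \<le> s * t" unfolding bc(3,4) by (intro mult_nonneg_nonneg fmax_nonneg)
    fix z assume "z \<in> set (prodl bs cs)"
    then obtain b c where z: "b \<in> set bs" "c \<in> set cs" "z = b * c" using prodl_set by blast
    have "HH z = HH b * HH c" using z sb Hm by auto
    also have "\<dots> \<le> s * t" using bc z fmax_ge fmax_nonneg Hnn sb by (intro mult_mono) auto
    finally show "HH z \<le> s * t" .
  qed
  finally show "rho0 (x * y) \<le> s * t" .
qed (use Reps_ne in \<open>auto intro: fmax_nonneg\<close>)

lemma R0_scal: assumes b: "b \<in> Bb" shows "rho0 (b * x) \<le> HH b * rho0 x"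
  unfolding rho0_def[of x]
proof (rule inf_scale_le)
  show "fmax HH ` Reps x \<noteq> {}" using Reps_ne by auto
  show "bdd_below (fmax HH ` Reps x)" by (auto intro: bdd0 fmax_nonneg)
  show "0 \<le> HH b" by (rule Hnn[OF b])
  fix t assume "t \<in> fmax HH ` Reps x"
  then obtain bs where bs: "bs \<in> Reps x" "t = fmax HH bs" by auto
  have sb: "set bs \<subseteq> Bb" using bs unfolding Reps_def by auto
  have "map (\<lambda>c. b * c) bs \<in> Reps (b * x)" using bs b unfolding Reps_def
    by (auto intro: Bmc simp: sum_list_const_mult)
  then have "rho0 (b * x) \<le> fmax HH (map (\<lambda>c. b * c) bs)" by (rule R0_low)
  also have "\<dots> \<le> HH b * t"
  proof (rule fmax_le)
    show "0 \<le> HH b * t" unfolding bs(2) using Hnn[OF b] by (intro mult_nonneg_nonneg fmax_nonneg)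
    fix z assume "z \<in> set (map (\<lambda>c. b * c) bs)"
    then obtain c where c: "c \<in> set bs" "z = b * c" by auto
    have "HH z = HH b * HH c" using c sb Hm b by auto
    also have "\<dots> \<le> HH b * t" using bs c fmax_ge Hnn[OF b] by (intro mult_left_mono) auto
    finally show "HH z \<le> HH b * t" .
  qed
  finally show "rho0 (b * x) \<le> HH b * t" .
qed

definition "PP = {b \<in> Bb. 0 < HH b}"
definition "rho1 r = Inf ((\<lambda>b. rho0 (b * r) / HH b) ` PP)"

lemma P1: "1 \<in> PP" unfolding PP_def using Bone H1 by auto
lemma Pmul: "b1 \<in> PP \<Longrightarrow> b2 \<in> PP \<Longrightarrow> b1 * b2 \<in> PP" unfolding PP_def using Bmc Hm by auto
lemma PB: "b \<in> PP \<Longrightarrow> b \<in> Bb" "b \<in> PP \<Longrightarrow> 0 < HH b" unfolding PP_def by auto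

lemma R1_nn: "b \<in> PP \<Longrightarrow> 0 \<le> rho0 (b * r) / HH b" using R0_nonneg[of "b * r"] PB(2)[of b] by simp

lemma R1_bdd: "bdd_below ((\<lambda>b. rho0 (b * r) / HH b) ` PP)"
  by (rule bdd0) (auto intro: R1_nn)

lemma R1_low: "b \<in> PP \<Longrightarrow> rho1 r \<le> rho0 (b * r) / HH b"
  unfolding rho1_def by (rule cInf_lower[OF _ R1_bdd]) auto

lemma R1_great: "(\<And>b. b \<in> PP \<Longrightarrow> c \<le> rho0 (b * r) / HH b) \<Longrightarrow> c \<le> rho1 r"
  unfolding rho1_def using P1 by (intro cInf_greatest) auto

lemma R1_dir: assumes "b1 \<in> PP" "b2 \<in> PP"
  shows "rho0 ((b1 * b2) * r) / HH (b1 * b2) \<le> rho0 (b1 * r) / HH b1"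
proof -
  have "rho0 ((b1 * b2) * r) = rho0 (b2 * (b1 * r))" by (simp add: algebra_simps)
  also have "\<dots> \<le> HH b2 * rho0 (b1 * r)" by (rule R0_scal[OF PB(1)[OF assms(2)]])
  finally have le: "rho0 ((b1 * b2) * r) \<le> HH b2 * rho0 (b1 * r)" .
  have h: "HH (b1 * b2) = HH b1 * HH b2" using Hm PB(1) assms by auto
  have p1: "0 < HH b1" and p2: "0 < HH b2" using PB(2) assms by auto
  show ?thesis unfolding h using le p1 p2 by (simp add: divide_le_eq field_simps)
qed

lemma rho1_SN: "rho1 \<in> SN Bb HH"
proof (rule SNI[OF ctx])
  show "0 \<le> rho1 x" for x by (rule R1_great) (rule R1_nn)
  show "rho1 1 = 1"
  proof (rule antisym)
    show "rho1 1 \<le> 1" using R1_low[OF P1, of 1] R0_Bb[OF Bone] H1 by simp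
    show "1 \<le> rho1 1"
    proof (rule R1_great)
      fix b assume b: "b \<in> PP"
      have "0 < HH b" by (rule PB(2)[OF b])
      then show "1 \<le> rho0 (b * 1) / HH b" using R0_Bb[OF PB(1)[OF b]] by simp
    qed
  qed
  show "rho1 (x + y) \<le> max (rho1 x) (rho1 y)" for x y
    unfolding rho1_def[of x] rho1_def[of y]
  proof (rule inf_max)
    fix s t assume "s \<in> (\<lambda>b. rho0 (b * x) / HH b) ` PP" "t \<in> (\<lambda>b. rho0 (b * y) / HH b) ` PP"
    then obtain b1 b2 where b: "b1 \<in> PP" "b2 \<in> PP" "s = rho0 (b1 * x) / HH b1" "t = rho0 (b2 * y) / HH b2" by auto
    have bp: "b1 * b2 \<in> PP" by (rule Pmul[OF b(1,2)])
    have hp: "0 < HH (b1 * b2)" using PB(2)[OF bp] .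
    have "rho1 (x + y) \<le> rho0 ((b1 * b2) * (x + y)) / HH (b1 * b2)" by (rule R1_low[OF bp])
    also have "\<dots> \<le> max (rho0 ((b1 * b2) * x)) (rho0 ((b1 * b2) * y)) / HH (b1 * b2)"
      using R0_add[of "(b1 * b2) * x" "(b1 * b2) * y"] hp by (intro divide_right_mono) (auto simp: distrib_left)
    also have "\<dots> = max (rho0 ((b1 * b2) * x) / HH (b1 * b2)) (rho0 ((b1 * b2) * y) / HH (b1 * b2))"
      using hp by (simp add: max_divide_distrib_right)
    also have "\<dots> \<le> max s t"
    proof (rule max.mono)
      show "rho0 ((b1 * b2) * x) / HH (b1 * b2) \<le> s" unfolding b(3) by (rule R1_dir[OF b(1,2)])
      show "rho0 ((b1 * b2) * y) / HH (b1 * b2) \<le> t" unfolding b(4) using R1_dir[OF b(2,1), of y] unfolding mult.commute[of b2 b1] .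
    qed
    finally show "rho1 (x + y) \<le> max s t" .
  qed (use P1 R1_bdd in auto)
  show "rho1 (x * y) \<le> rho1 x * rho1 y" for x y
    unfolding rho1_def[of x] rho1_def[of y]
  proof (rule inf_mult)
    fix s t assume "s \<in> (\<lambda>b. rho0 (b * x) / HH b) ` PP" "t \<in> (\<lambda>b. rho0 (b * y) / HH b) ` PP"
    then obtain b1 b2 where b: "b1 \<in> PP" "b2 \<in> PP" "s = rho0 (b1 * x) / HH b1" "t = rho0 (b2 * y) / HH b2" by auto
    have bp: "b1 * b2 \<in> PP" by (rule Pmul[OF b(1,2)])
    have h: "HH (b1 * b2) = HH b1 * HH b2" using Hm PB(1) b by auto
    have p1: "0 < HH b1" and p2: "0 < HH b2" using PB(2) b by auto
    have "rho1 (x * y) \<le> rho0 ((b1 * b2) * (x * y)) / HH (b1 * b2)" by (rule R1_low[OF bp])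
    also have "rho0 ((b1 * b2) * (x * y)) = rho0 ((b1 * x) * (b2 * y))" by (simp add: algebra_simps)
    also have "rho0 ((b1 * x) * (b2 * y)) / HH (b1 * b2) \<le> rho0 (b1 * x) * rho0 (b2 * y) / HH (b1 * b2)"
      using R0_mul PB(2)[OF bp] by (intro divide_right_mono) auto
    also have "\<dots> = s * t" unfolding b(3,4) h by simp
    finally show "rho1 (x * y) \<le> s * t" .
  qed (use P1 R1_nn in auto)
  show "rho1 (c * x) = HH c * rho1 x" if c: "c \<in> Bb" for c x
  proof (rule antisym)
    show "rho1 (c * x) \<le> HH c * rho1 x"
      unfolding rho1_def[of x]
    proof (rule inf_scale_le)
      show "(\<lambda>b. rho0 (b * x) / HH b) ` PP \<noteq> {}" using P1 by auto
      show "bdd_below ((\<lambda>b. rho0 (b * x) / HH b) ` PP)" by (rule R1_bdd)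
      show "0 \<le> HH c" by (rule Hnn[OF c])
      fix t assume "t \<in> (\<lambda>b. rho0 (b * x) / HH b) ` PP"
      then obtain b where b: "b \<in> PP" "t = rho0 (b * x) / HH b" by auto
      have "rho1 (c * x) \<le> rho0 (b * (c * x)) / HH b" by (rule R1_low[OF b(1)])
      also have "rho0 (b * (c * x)) = rho0 (c * (b * x))" by (simp add: algebra_simps)
      also have "rho0 (c * (b * x)) / HH b \<le> HH c * rho0 (b * x) / HH b"
        using R0_scal[OF c, of "b * x"] PB(2)[OF b(1)] by (intro divide_right_mono) auto
      also have "\<dots> = HH c * t" using b(2) by simp
      finally show "rho1 (c * x) \<le> HH c * t" .
    qed
    show "HH c * rho1 x \<le> rho1 (c * x)"
    proof (cases "HH c = 0")
      case True then show ?thesis using R1_great[OF R1_nn] by simp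
    next
      case False
      then have hc: "0 < HH c" using Hnn[OF c] by simp
      then have cP: "c \<in> PP" using c unfolding PP_def by auto
      show ?thesis
      proof (rule R1_great)
        fix b assume b: "b \<in> PP"
        have bc: "b * c \<in> PP" by (rule Pmul[OF b cP])
        have "HH c * rho1 x \<le> HH c * (rho0 ((b * c) * x) / HH (b * c))"
          using R1_low[OF bc] hc by (intro mult_left_mono) auto
        also have "\<dots> = rho0 (b * (c * x)) / HH b"
          using Hm PB(1)[OF b] c hc by (simp add: algebra_simps)
        finally show "HH c * rho1 x \<le> rho0 (b * (c * x)) / HH b" .
      qed
    qed
  qed
qed

lemma HARD: "\<exists>w\<in>berk v emb. \<forall>a. w (phi a) = f (tmono 1 (phi a))"
proof -
  obtain w where m: "isMin Bb HH w" using exists_min[OF ctx rho1_SN] by blast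
  have r: "w \<in> SN Bb HH" using isMin_def[OF ctx, of w] m by blast
  have W1: "0 \<le> w x" for x by (rule SND(1)[of Bb HH w]) (use ctx r in auto)
  have W2: "w 1 = 1" by (rule SND(2)[of Bb HH w]) (use ctx r in auto)
  have W3: "w (a + b) \<le> max (w a) (w b)" for a b by (rule SND(3)[of Bb HH w]) (use ctx r in auto)
  have W5: "w (b * x) = HH b * w x" if "b \<in> Bb" for b x by (rule SND(5)[of Bb HH w]) (use ctx r that in auto)
  have W0: "w 0 = 0" by (rule SN_0[of Bb HH w]) (use ctx r in auto)
  have WM: "w (a * b) = w a * w b" for a b by (rule min_mult[of Bb HH w]) (use ctx m in auto)
  have wphi: "w (phi a) = HH (phi a)" for a using W5[OF Bphi, of a 1] W2 by simp
  have "w \<in> berk v emb" unfolding berk_def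
  proof (intro CollectI conjI allI)
    show "0 \<le> w r" for r by (rule W1)
    show "w 0 = 0" by (rule W0)
    show "w 1 = 1" by (rule W2)
    show "w (a * b) = w a * w b" for a b by (rule WM)
    show "w (a + b) \<le> max (w a) (w b)" for a b by (rule W3)
    show "w (emb l) = v l" for l
    proof -
      have "emb l * 1 \<in> Bb" by (rule Bsc[OF Bone])
      then have "w (emb l * 1 * 1) = HH (emb l * 1) * w 1" by (rule W5)
      then show ?thesis using W2 Hsc[OF Bone, of l] H1 by simp
    qed
  qed
  then show ?thesis using wphi unfolding HH_def by blast
qed

end



lemma cont_into_sub_prod:
  assumes "\<And>x. x \<in> topspace X \<Longrightarrow> g x \<in> S" "\<And>x. x \<in> topspace X \<Longrightarrow> g x \<in> extensional I"
    "\<And>k. k \<in> I \<Longrightarrow> continuous_map X euclideanreal (\<lambda>x. g x k)"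
  shows "continuous_map X (subtopology (product_topology (\<lambda>_. euclideanreal) I) S) g"
  unfolding continuous_map_in_subtopology continuous_map_componentwise using assms by auto

lemma proj_sub: "k \<in> I \<Longrightarrow> continuous_map (subtopology (product_topology (\<lambda>_. euclideanreal) I) S) euclideanreal (\<lambda>x. x k)"
  by (rule continuous_map_from_subtopology) (rule continuous_map_product_projection[where X="\<lambda>_. euclideanreal", simplified])

lemma cont_fmax:
  assumes "finite F" "\<And>m. m \<in> F \<Longrightarrow> continuous_map X euclideanreal (g m)"
  shows "continuous_map X euclideanreal (\<lambda>z. Max (insert (0::real) ((\<lambda>m. g m z) ` F)))"
  using assms
proof (induction F rule: finite_induct)
  case empty then show ?case by simp
next
  case (insert a F)
  have "(\<lambda>z. Max (insert (0::real) ((\<lambda>m. g m z) ` insert a F))) = (\<lambda>z. max (g a z) (Max (insert 0 ((\<lambda>m. g m z) ` F))))"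
  proof
    fix z
    have "insert (0::real) ((\<lambda>m. g m z) ` insert a F) = insert (g a z) (insert 0 ((\<lambda>m. g m z) ` F))" by auto
    then show "Max (insert (0::real) ((\<lambda>m. g m z) ` insert a F)) = max (g a z) (Max (insert 0 ((\<lambda>m. g m z) ` F)))"
      using insert(1) by simp
  qed
  then show ?case using insert by (auto intro: continuous_map_real_max)
qed

lemma cont_ev:
  assumes "x \<in> fsum M" "\<And>m. x m \<noteq> 0 \<Longrightarrow> continuous_map X euclideanreal (\<lambda>z. W z m)"
  shows "continuous_map X euclideanreal (\<lambda>z. ev (W z) x)"
proof -
  have eq: "(\<lambda>z. ev (W z) x) = (\<lambda>z. Max (insert 0 ((\<lambda>m. x m * W z m) ` {m. x m \<noteq> 0})))"
    unfolding ev_def ev_set ..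
  have "continuous_map X euclideanreal (\<lambda>z. Max (insert 0 ((\<lambda>m. x m * W z m) ` {m. x m \<noteq> 0})))"
    using fsumD(2)[OF assms(1)] by (rule cont_fmax) (use assms(2) in \<open>auto intro: continuous_map_real_mult_left\<close>)
  then show ?thesis unfolding eq .
qed

lemma ev_cong: "x \<in> fsum M \<Longrightarrow> (\<And>m. m \<in> M \<Longrightarrow> w1 m = w2 m) \<Longrightarrow> ev w1 x = ev w2 x"
  unfolding ev_def using fsumD(3) by (metis (no_types, lifting))

lemma ts_berk: "topspace (berk_top v emb) = berk v emb"
  by (auto simp: berk_top_def topspace_product_topology_alt)

lemma ts_bend: "topspace (bend_top v emb Cb) = bend_hom v emb Cb"
  by (auto simp: bend_top_def topspace_product_topology_alt bend_hom_def extensional_def)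

lemma trop_eq: "TropKP_top v emb phi = subtopology (product_topology (\<lambda>_. euclideanreal) UNIV) (monhom_T \<inter> tropKP phi ` berk v emb)"
  by (simp add: TropKP_top_def monhom_top_def subtopology_subtopology)

lemma ts_trop: "topspace (TropKP_top v emb phi) = monhom_T \<inter> tropKP phi ` berk v emb"
  by (auto simp: trop_eq topspace_product_topology_alt)

lemma berkD: assumes "w \<in> berk v emb"
  shows "\<And>r. 0 \<le> w r" "w 0 = 0" "w 1 = 1" "\<And>a b. w (a * b) = w a * w b" "\<And>a b. w (a + b) \<le> max (w a) (w b)"
    "\<And>l. w (emb l) = v l"
  using assms unfolding berk_def by auto

lemma berk_sum_list: assumes w: "w \<in> berk v emb" shows "w (sum_list bs) \<le> fmax w bs"
proof (induction bs)
  case Nil then show ?case using berkD(2)[OF w] by simp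
next
  case (Cons b bs)
  have "w (sum_list (b # bs)) \<le> max (w b) (w (sum_list bs))" using berkD(5)[OF w] by simp
  then show ?case using Cons by auto
qed

lemma berk_ev_hom: assumes v: "nonarch_abs v" and g: "good emb Cb" and w: "w \<in> berk v emb"
  shows "restrict (ev w) (fsum Cb) \<in> bend_hom v emb Cb"
  by (rule ev_hom[OF v g]) (auto simp: berkD[OF w] berk_sum_list[OF w])

lemma good_UNIV: "good emb UNIV" unfolding good_def mulclosed_def by auto

lemma b2b_eq: "berk_to_bend w = restrict (ev w) (fsum UNIV)"
  unfolding berk_to_bend_def ev_def ..

lemma tropKP_monhom: assumes w: "w \<in> berk v emb" and p: "monoid0_hom phi" shows "tropKP phi w \<in> monhom_T"
  using p berkD[OF w] unfolding monhom_T_def tropKP_def monoid0_hom_def by auto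



lemma phi_in_Bb: "k_algebra_map emb \<Longrightarrow> phi a \<in> Bbullet emb phi"
proof -
  assume e: "k_algebra_map emb"
  have "phi a = emb 1 * phi a" using e by (simp add: k_algebra_map_def)
  then show ?thesis unfolding Bbullet_def by blast
qed

theorem theoremC:
  fixes v :: "'k::field \<Rightarrow> real"
    and emb :: "'k \<Rightarrow> 'r::comm_ring_1"
    and phi :: "'a::{comm_monoid_mult,mult_zero,zero_neq_one} \<Rightarrow> 'r"
  assumes "nonarch_abs v"
    and "k_algebra_map emb"
    and "toric_monoid0 TYPE('a)"
    and "monoid0_hom phi"
    and "pi_surjective emb phi"
  shows "homeomorphic_map (berk_top v emb) (bend_top v emb UNIV) berk_to_bend
       \<and> homeomorphic_map (bend_top v emb (Bbullet emb phi)) (TropKP_top v emb phi) (bend_to_trop phi)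
       \<and> continuous_map (berk_top v emb) (TropKP_top v emb phi) (tropKP phi)
       \<and> continuous_map (bend_top v emb UNIV) (bend_top v emb (Bbullet emb phi))
            (bend_beta_pullback (Bbullet emb phi))
       \<and> (\<forall>w\<in>berk v emb.
            bend_to_trop phi (bend_beta_pullback (Bbullet emb phi) (berk_to_bend w)) = tropKP phi w)"
proof -
  note v = assms(1) and e = assms(2) and p = assms(4) and s = assms(5)
  define Bb where "Bb = Bbullet emb phi"
  have gB: "good emb Bb" unfolding Bb_def by (rule Bb_good[OF e p])
  have Bphi: "phi a \<in> Bb" for a unfolding Bb_def by (rule phi_in_Bb[OF e])
  have fsB: "fsum Bb \<subseteq> fsum UNIV" unfolding fsum_def by auto

  have P1a: "berk_to_bend w \<in> bend_hom v emb UNIV" if "w \<in> berk v emb" for w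
    unfolding b2b_eq by (rule berk_ev_hom[OF v good_UNIV that])
  define G1 where "G1 = (\<lambda>(f::('r \<Rightarrow> real) \<Rightarrow> real) r. f (tmono 1 r))"
  have P1b: "G1 f \<in> berk v emb" if f: "f \<in> bend_hom v emb UNIV" for f
    unfolding berk_def G1_def
  proof (intro CollectI conjI allI)
    show "0 \<le> f (tmono 1 r)" for r by (rule H_nonneg[OF v good_UNIV f]) simp
    show "f (tmono 1 0) = 0"
    proof -
      have "f (tmono 1 (emb 0 * 1)) = v 0 * f (tmono 1 1)" by (rule H_scal[OF v good_UNIV f]) simp
      then show ?thesis using kalgD(1)[OF e] nonarchD(2)[OF v] by simp
    qed
    show "f (tmono 1 1) = 1" by (rule H_one[OF v good_UNIV f])
    show "f (tmono 1 (a * b)) = f (tmono 1 a) * f (tmono 1 b)" for a b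
      by (rule H_mul[OF v good_UNIV f]) simp_all
    show "f (tmono 1 (a + b)) \<le> max (f (tmono 1 a)) (f (tmono 1 b))" for a b
    proof -
      have "f (tmono 1 (a + b)) \<le> fmax (\<lambda>b. f (tmono 1 b)) [a, b]" by (rule H_ord[OF v good_UNIV f]) simp_all
      moreover have "0 \<le> f (tmono 1 b)" by (rule H_nonneg[OF v good_UNIV f]) simp
      ultimately show ?thesis by simp
    qed
    show "f (tmono 1 (emb l)) = v l" for l
    proof -
      have "f (tmono 1 (emb l * 1)) = v l * f (tmono 1 1)" by (rule H_scal[OF v good_UNIV f]) simp
      then show ?thesis using H_one[OF v good_UNIV f] by simp
    qed
  qed
  have P1c: "berk_to_bend (G1 f) = f" if f: "f \<in> bend_hom v emb UNIV" for f
    unfolding b2b_eq G1_def by (rule f_eq_restrict[OF v good_UNIV f, symmetric])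
  have P1d: "G1 (berk_to_bend w) = w" if w: "w \<in> berk v emb" for w
  proof
    fix r :: 'r
    have "tmono 1 r \<in> fsum UNIV" by (rule tmono_fsum) simp_all
    then show "G1 (berk_to_bend w) r = w r" unfolding G1_def b2b_eq using berkD(1)[OF w] by (simp add: ev_tmono)
  qed
  have cont1: "continuous_map (berk_top v emb) (bend_top v emb UNIV) berk_to_bend"
    unfolding bend_top_def[of v emb UNIV]
  proof (rule cont_into_sub_prod)
    show "berk_to_bend x \<in> bend_hom v emb UNIV" if "x \<in> topspace (berk_top v emb)" for x
      using that P1a ts_berk by auto
    show "berk_to_bend x \<in> extensional (fsum UNIV)" for x unfolding b2b_eq by simp
    fix k :: "'r \<Rightarrow> real" assume k: "k \<in> fsum UNIV"
    have "(\<lambda>x. berk_to_bend x k) = (\<lambda>x. ev x k)" unfolding b2b_eq using k by simp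
    moreover have "continuous_map (berk_top v emb) euclideanreal (\<lambda>x. ev x k)"
      by (rule cont_ev[OF k]) (unfold berk_top_def, rule proj_sub, simp)
    ultimately show "continuous_map (berk_top v emb) euclideanreal (\<lambda>x. berk_to_bend x k)" by simp
  qed
  have cont1': "continuous_map (bend_top v emb UNIV) (berk_top v emb) G1"
    unfolding berk_top_def[of v emb]
  proof (rule cont_into_sub_prod)
    show "G1 x \<in> berk v emb" if "x \<in> topspace (bend_top v emb UNIV)" for x
      using that unfolding ts_bend by (rule P1b)
    show "G1 x \<in> extensional UNIV" for x by simp
    fix k :: 'r
    have "tmono 1 k \<in> fsum UNIV" by (rule tmono_fsum) simp_all
    then show "continuous_map (bend_top v emb UNIV) euclideanreal (\<lambda>x. G1 x k)"
      unfolding G1_def bend_top_def by (rule proj_sub)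
  qed
  have homeo1: "homeomorphic_map (berk_top v emb) (bend_top v emb UNIV) berk_to_bend"
    unfolding homeomorphic_map_maps homeomorphic_maps_def
  proof (intro exI[of _ G1] conjI ballI)
    show "continuous_map (berk_top v emb) (bend_top v emb UNIV) berk_to_bend" by (rule cont1)
    show "continuous_map (bend_top v emb UNIV) (berk_top v emb) G1" by (rule cont1')
    show "G1 (berk_to_bend x) = x" if "x \<in> topspace (berk_top v emb)" for x
      using that unfolding ts_berk by (rule P1d)
    show "berk_to_bend (G1 y) = y" if "y \<in> topspace (bend_top v emb UNIV)" for y
      using that unfolding ts_bend by (rule P1c)
  qed

  have P3a: "bend_beta_pullback Bb g \<in> bend_hom v emb Bb" if g: "g \<in> bend_hom v emb UNIV" for g
  proof -
    have W: "G1 g \<in> berk v emb" by (rule P1b[OF g])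
    have "bend_beta_pullback Bb g = bend_beta_pullback Bb (berk_to_bend (G1 g))" using P1c[OF g] by simp
    also have "\<dots> = restrict (ev (G1 g)) (fsum Bb)"
      unfolding bend_beta_pullback_def b2b_eq using fsB by (auto simp: restrict_def fun_eq_iff)
    finally show ?thesis using berk_ev_hom[OF v gB W] by simp
  qed
  have P3d: "bend_to_trop phi (bend_beta_pullback Bb (berk_to_bend w)) = tropKP phi w" if w: "w \<in> berk v emb" for w
  proof
    fix a
    have t: "tmono 1 (phi a) \<in> fsum Bb" by (rule tmono_fsum) (simp_all add: Bphi)
    then have "tmono 1 (phi a) \<in> fsum UNIV" using fsB by auto
    then show "bend_to_trop phi (bend_beta_pullback Bb (berk_to_bend w)) a = tropKP phi w a"
      unfolding bend_to_trop_def bend_beta_pullback_def b2b_eq tropKP_def using t berkD(1)[OF w]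
      by (simp add: ev_tmono)
  qed
  have cont3: "continuous_map (berk_top v emb) (TropKP_top v emb phi) (tropKP phi)"
    unfolding trop_eq
  proof (rule cont_into_sub_prod)
    show "tropKP phi x \<in> monhom_T \<inter> tropKP phi ` berk v emb" if "x \<in> topspace (berk_top v emb)" for x
      using that ts_berk tropKP_monhom[OF _ p] by auto
    show "tropKP phi x \<in> extensional UNIV" for x by simp
    fix k
    show "continuous_map (berk_top v emb) euclideanreal (\<lambda>x. tropKP phi x k)"
      unfolding tropKP_def berk_top_def by (rule proj_sub) simp
  qed
  have cont4: "continuous_map (bend_top v emb UNIV) (bend_top v emb Bb) (bend_beta_pullback Bb)"
  proof -
    have "continuous_map (bend_top v emb UNIV) (subtopology (product_topology (\<lambda>_. euclideanreal) (fsum Bb)) (bend_hom v emb Bb)) (bend_beta_pullback Bb)"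
    proof (rule cont_into_sub_prod)
      show "bend_beta_pullback Bb x \<in> bend_hom v emb Bb" if "x \<in> topspace (bend_top v emb UNIV)" for x
        using that unfolding ts_bend by (rule P3a)
      show "bend_beta_pullback Bb x \<in> extensional (fsum Bb)" for x unfolding bend_beta_pullback_def by simp
      fix k assume k: "k \<in> fsum Bb"
      then have k': "k \<in> fsum UNIV" using fsB by auto
      have "(\<lambda>x. bend_beta_pullback Bb x k) = (\<lambda>x. x k)" unfolding bend_beta_pullback_def using k by simp
      moreover have "continuous_map (bend_top v emb UNIV) euclideanreal (\<lambda>x. x k)"
        unfolding bend_top_def using k' by (rule proj_sub)
      ultimately show "continuous_map (bend_top v emb UNIV) euclideanreal (\<lambda>x. bend_beta_pullback Bb x k)" by simp
    qed
    then show ?thesis unfolding bend_top_def[of v emb Bb] .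
  qed

  define rep where "rep = (\<lambda>m. SOME pr. m = emb (fst pr) * phi (snd pr))"
  have rep: "m = emb (fst (rep m)) * phi (snd (rep m))" if mB: "m \<in> Bb" for m
  proof -
    obtain c a where "m = emb c * phi a" using mB unfolding Bb_def Bbullet_def by blast
    then have "\<exists>pr. m = emb (fst pr) * phi (snd pr)" by (intro exI[of _ "(c, a)"]) simp
    then show ?thesis unfolding rep_def by (rule someI_ex)
  qed
  define G2 where "G2 = (\<lambda>h. restrict (ev (\<lambda>m. v (fst (rep m)) * h (snd (rep m)))) (fsum Bb))"
  have H_rep: "f (tmono 1 m) = v (fst (rep m)) * f (tmono 1 (phi (snd (rep m))))"
    if f: "f \<in> bend_hom v emb Bb" and m: "m \<in> Bb" for f m
    using H_scal[OF v gB f Bphi, of "fst (rep m)" "snd (rep m)"] rep[OF m] by simp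
  have P2a: "bend_to_trop phi f \<in> monhom_T \<inter> tropKP phi ` berk v emb" if f: "f \<in> bend_hom v emb Bb" for f
  proof -
    obtain w where w: "w \<in> berk v emb" "\<forall>a. w (phi a) = f (tmono 1 (phi a))"
      using HARD[OF v e p s f[unfolded Bb_def]] by blast
    have "bend_to_trop phi f = tropKP phi w" unfolding bend_to_trop_def tropKP_def using w(2) by simp
    then show ?thesis using w(1) tropKP_monhom[OF w(1) p] by auto
  qed
  have P2b: "G2 (bend_to_trop phi f) = f" if f: "f \<in> bend_hom v emb Bb" for f
  proof -
    have "G2 (bend_to_trop phi f) = restrict (ev (\<lambda>m. f (tmono 1 m))) (fsum Bb)"
      unfolding G2_def bend_to_trop_def
    proof (rule restrict_ext)
      fix x assume x: "x \<in> fsum Bb"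
      show "ev (\<lambda>m. v (fst (rep m)) * f (tmono 1 (phi (snd (rep m))))) x = ev (\<lambda>m. f (tmono 1 m)) x"
        by (rule ev_cong[OF x]) (simp add: H_rep[OF f])
    qed
    moreover have "restrict (ev (\<lambda>m. f (tmono 1 m))) (fsum Bb) = f" by (rule f_eq_restrict[OF v gB f, symmetric])
    ultimately show ?thesis by (rule HOL.trans)
  qed
  have P2c: "G2 h \<in> bend_hom v emb Bb \<and> bend_to_trop phi (G2 h) = h" if h: "h \<in> monhom_T \<inter> tropKP phi ` berk v emb" for h
  proof -
    obtain w where w: "w \<in> berk v emb" "h = tropKP phi w" using h by auto
    have "G2 h = bend_beta_pullback Bb (berk_to_bend w)"
      unfolding G2_def bend_beta_pullback_def b2b_eq
    proof
      fix x show "restrict (ev (\<lambda>m. v (fst (rep m)) * h (snd (rep m)))) (fsum Bb) x = restrict (restrict (ev w) (fsum UNIV)) (fsum Bb) x"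
      proof (cases "x \<in> fsum Bb")
        case True
        have "ev (\<lambda>m. v (fst (rep m)) * h (snd (rep m))) x = ev w x"
        proof (rule ev_cong[OF True])
          fix m assume m: "m \<in> Bb"
          have "w m = w (emb (fst (rep m)) * phi (snd (rep m)))" using rep[OF m] by simp
          also have "\<dots> = v (fst (rep m)) * w (phi (snd (rep m)))" using berkD(4,6)[OF w(1)] by simp
          finally show "v (fst (rep m)) * h (snd (rep m)) = w m" unfolding w(2) tropKP_def by simp
        qed
        then show ?thesis using True fsB by auto
      next
        case False then show ?thesis by simp
      qed
    qed
    then show ?thesis using P3a[OF P1a[OF w(1)]] P3d[OF w(1)] w(2) by simp
  qed
  have cont2: "continuous_map (bend_top v emb Bb) (TropKP_top v emb phi) (bend_to_trop phi)"
    unfolding trop_eq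
  proof (rule cont_into_sub_prod)
    show "bend_to_trop phi x \<in> monhom_T \<inter> tropKP phi ` berk v emb" if "x \<in> topspace (bend_top v emb Bb)" for x
      using that unfolding ts_bend by (rule P2a)
    show "bend_to_trop phi x \<in> extensional UNIV" for x by simp
    fix k
    have "tmono 1 (phi k) \<in> fsum Bb" by (rule tmono_fsum) (simp_all add: Bphi)
    then show "continuous_map (bend_top v emb Bb) euclideanreal (\<lambda>x. bend_to_trop phi x k)"
      unfolding bend_to_trop_def bend_top_def by (rule proj_sub)
  qed
  have cont2': "continuous_map (TropKP_top v emb phi) (bend_top v emb Bb) G2"
    unfolding bend_top_def[of v emb Bb]
  proof (rule cont_into_sub_prod)
    show "G2 x \<in> bend_hom v emb Bb" if "x \<in> topspace (TropKP_top v emb phi)" for x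
      using that unfolding ts_trop by (rule P2c[THEN conjunct1])
    show "G2 x \<in> extensional (fsum Bb)" for x unfolding G2_def by simp
    fix k assume k: "k \<in> fsum Bb"
    have "(\<lambda>x. G2 x k) = (\<lambda>x. ev (\<lambda>m. v (fst (rep m)) * x (snd (rep m))) k)" unfolding G2_def using k by simp
    moreover have "continuous_map (TropKP_top v emb phi) euclideanreal (\<lambda>x. ev (\<lambda>m. v (fst (rep m)) * x (snd (rep m))) k)"
      by (rule cont_ev[OF k]) (unfold trop_eq, intro continuous_map_real_mult_left proj_sub, simp)
    ultimately show "continuous_map (TropKP_top v emb phi) euclideanreal (\<lambda>x. G2 x k)" by simp
  qed
  have homeo2: "homeomorphic_map (bend_top v emb Bb) (TropKP_top v emb phi) (bend_to_trop phi)"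
    unfolding homeomorphic_map_maps homeomorphic_maps_def
  proof (intro exI[of _ G2] conjI ballI)
    show "continuous_map (bend_top v emb Bb) (TropKP_top v emb phi) (bend_to_trop phi)" by (rule cont2)
    show "continuous_map (TropKP_top v emb phi) (bend_top v emb Bb) G2" by (rule cont2')
    show "G2 (bend_to_trop phi x) = x" if "x \<in> topspace (bend_top v emb Bb)" for x
      using that unfolding ts_bend by (rule P2b)
    show "bend_to_trop phi (G2 y) = y" if "y \<in> topspace (TropKP_top v emb phi)" for y
      using that unfolding ts_trop by (rule P2c[THEN conjunct2])
  qed
  show ?thesis using homeo1 homeo2 cont3 cont4 P3d unfolding Bb_def by blast
qed


end
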